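(* Let $c>0$ and $\alpha>-\frac12$ be real numbers and let $n\ge0$ be an integer such that $\chi_{n,\alpha}(c)\ge 6\,\frac{\alpha+1}{\alpha+3}$ and $q=\frac{c^2}{\chi_{n,\alpha}(c)}$ satisfies $q\le\frac12+\alpha$ if $-\frac12<\alpha\le 0$, and $q\le\min\left(1,\frac12+\alpha\right)$ if $\alpha>0$. Then $$\sup_{t\in[-1,1]}|\varphi_{n,c}^{\alpha}(t)|=|\varphi_{n,c}^{\alpha}(1)|\le 3\sqrt{\alpha+1}\,\big(\chi_{n,\alpha}(c)\big)^{\frac{\alpha+1}{2}}.$$
   Context: $\omega_\alpha(t)=(1-t^2)^\alpha$. $\varphi_{n,c}^{\alpha}$ is the eigenfunction, normalized by $\int_{-1}^1(\varphi_{n,c}^\alpha)^2\omega_\alpha=1$, of the operator $\mathcal L_c^{\alpha}f(x)=\int_{-1}^1 e^{cxy}f(y)\omega_\alpha(y)\,dy$ on $L^2([-1,1],\omega_\alpha)$ associated with its $(n+1)$-th largest eigenvalue (eigenvalues indexed from $n=0$ in decreasing order). The functions $\varphi_{n,c}^\alpha$ are also the eigenfunctions of the Sturm–Liouville operator $-\mathcal D_c^\alpha$, and $\chi_{n,\alpha}(c)$ is the corresponding eigenvalue: $-\frac{d}{dx}\big[\omega_\alpha(x)(1-x^2)(\varphi_{n,c}^\alpha)'(x)\big]-c^2x^2\omega_\alpha(x)\varphi_{n,c}^\alpha(x)=\chi_{n,\alpha}(c)\,\omega_\alpha(x)\varphi_{n,c}^\alpha(x)$ for $x\in(-1,1)$;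 one has $n(n+2\alpha+1)-c^2\le\chi_{n,\alpha}(c)\le n(n+2\alpha+1)$. *)

theory Defs
  imports "HOL-Analysis.Analysis"
begin

text \<open>Jacobi weight \<open>\<omega>_\<alpha>(t) = (1 - t^2)^\<alpha>\<close> (powr; the value at t = +-1 is irrelevant, measure zero).\<close>
definition jweight :: "real \<Rightarrow> real \<Rightarrow> real" where
  "jweight \<alpha> t = (1 - t\<^sup>2) powr \<alpha>"

definition in_L2w :: "real \<Rightarrow> (real \<Rightarrow> real) \<Rightarrow> bool" where
  "in_L2w \<alpha> f \<longleftrightarrow> f \<in> borel_measurable lborel \<and>
     set_integrable lborel {-1..1} (\<lambda>y. (f y)\<^sup>2 * jweight \<alpha> y)"

definition normsq_w :: "real \<Rightarrow> (real \<Rightarrow> real) \<Rightarrow> real" where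
  "normsq_w \<alpha> f = (LINT y:{-1..1}|lborel. (f y)\<^sup>2 * jweight \<alpha> y)"

definition Lop :: "real \<Rightarrow> real \<Rightarrow> (real \<Rightarrow> real) \<Rightarrow> real \<Rightarrow> real" where
  "Lop c \<alpha> f x = (LINT y:{-1..1}|lborel. exp (c * x * y) * f y * jweight \<alpha> y)"

text \<open>f is an eigenfunction of L_c^\<alpha> with eigenvalue \<mu> (f nonzero in L^2, the
  identity holding pointwise on [-1,1], i.e. f is the continuous representative).\<close>
definition is_eigenfun :: "real \<Rightarrow> real \<Rightarrow> real \<Rightarrow> (real \<Rightarrow> real) \<Rightarrow> bool" where
  "is_eigenfun c \<alpha> \<mu> f \<longleftrightarrow> in_L2w \<alpha> f \<and> normsq_w \<alpha> f > 0 \<and>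
     (\<forall>x\<in>{-1..1}. Lop c \<alpha> f x = \<mu> * f x)"

definition eigenvalues_L :: "real \<Rightarrow> real \<Rightarrow> real set" where
  "eigenvalues_L c \<alpha> = {\<mu>. \<exists>f. is_eigenfun c \<alpha> \<mu> f}"

text \<open>\<mu> is the (n+1)-th largest eigenvalue (index n, from 0): exactly n eigenvalues exceed it.\<close>
definition nth_eigenvalue_L :: "real \<Rightarrow> real \<Rightarrow> nat \<Rightarrow> real \<Rightarrow> bool" where
  "nth_eigenvalue_L c \<alpha> n \<mu> \<longleftrightarrow> \<mu> \<in> eigenvalues_L c \<alpha> \<and>
     finite {\<nu>\<in>eigenvalues_L c \<alpha>. \<nu> > \<mu>} \<and> card {\<nu>\<in>eigenvalues_L c \<alpha>. \<nu> > \<mu>} = n"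

definition is_phi :: "real \<Rightarrow> real \<Rightarrow> nat \<Rightarrow> (real \<Rightarrow> real) \<Rightarrow> bool" where
  "is_phi c \<alpha> n \<phi> \<longleftrightarrow> (\<exists>\<mu>. nth_eigenvalue_L c \<alpha> n \<mu> \<and> is_eigenfun c \<alpha> \<mu> \<phi>) \<and>
     normsq_w \<alpha> \<phi> = 1"

definition SL_eigenvalue :: "real \<Rightarrow> real \<Rightarrow> (real \<Rightarrow> real) \<Rightarrow> real \<Rightarrow> bool" where
  "SL_eigenvalue c \<alpha> \<phi> chi \<longleftrightarrow> (\<exists>dphi D. \<forall>x\<in>{-1<..<1}.
     (\<phi> has_real_derivative dphi x) (at x) \<and>
     ((\<lambda>t. jweight \<alpha> t * (1 - t\<^sup>2) * dphi t) has_real_derivative D x) (at x) \<and>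
     - D x - c\<^sup>2 * x\<^sup>2 * jweight \<alpha> x * \<phi> x = chi * jweight \<alpha> x * \<phi> x)"

end

theory Submission
  imports Defs
begin

lemma dpow:
  assumes "-1 < t" "t < 1"
  shows "((\<lambda>t. (1 - t\<^sup>2) powr b) has_real_derivative b * (1 - t\<^sup>2) powr (b - 1) * (- 2 * t)) (at t)"
proof -
  have "1 - t\<^sup>2 > 0" using assms by (simp add: abs_square_less_1 abs_less_iff)
  moreover have "((\<lambda>t. 1 - t\<^sup>2) has_real_derivative - 2 * t) (at t)"
    by (auto intro!: derivative_eq_intros)
  ultimately show ?thesis using DERIV_fun_powr[of "\<lambda>t. 1 - t\<^sup>2" "-2*t" t b] by simp
qed

lemma pos1: "-1 < t \<Longrightarrow> t < 1 \<Longrightarrow> 1 - t\<^sup>2 > (0::real)"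
  by (simp add: abs_square_less_1 abs_less_iff)

lemma powr_succ: "(x::real) \<ge> 0 \<Longrightarrow> x powr (b + 1) = x powr b * x"
  by (simp add: powr_add)

lemma bounded_cont:
  fixes h :: "real \<Rightarrow> real"
  assumes "continuous_on {a..b} h"
  shows "\<exists>B. \<forall>x\<in>{a..b}. \<bar>h x\<bar> \<le> B"
proof -
  have "compact (h ` {a..b})" by (rule compact_continuous_image[OF assms compact_Icc])
  then have "bounded (h ` {a..b})" by (rule compact_imp_bounded)
  then show ?thesis unfolding bounded_iff by auto
qed

lemma p_tendsto:
  assumes "b > 0"
  shows "((\<lambda>x. (1 - x\<^sup>2) powr b) \<longlongrightarrow> 0) (at_left (1::real))"
proof -
  have c: "continuous_on {-1..1} (\<lambda>x::real. (1 - x\<^sup>2) powr b)"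
    apply (rule continuous_on_powr')
    using assms by (auto intro!: continuous_intros simp: abs_square_le_1)
  have "((\<lambda>x. (1 - x\<^sup>2) powr b) \<longlongrightarrow> (1 - 1\<^sup>2) powr b) (at 1 within {-1..1})"
    using c[unfolded continuous_on_def, rule_format, of 1] by simp
  then have "((\<lambda>x. (1 - x\<^sup>2) powr b) \<longlongrightarrow> 0) (at 1 within {-1..1})" by simp
  then show ?thesis using at_within_Icc_at_left[of "-1::real" 1] by simp
qed

locale ode_sol =
  fixes f f1 f2 :: "real \<Rightarrow> real" and \<alpha> chi c :: real
  assumes d1: "\<And>x. (f has_real_derivative f1 x) (at x)"
  and d2: "\<And>x. (f1 has_real_derivative f2 x) (at x)"
  and ode: "\<And>x. -1 < x \<Longrightarrow> x < 1 \<Longrightarrow> (1 - x\<^sup>2) * f2 x - 2 * (\<alpha> + 1) * x * f1 x + (chi + c\<^sup>2 * x\<^sup>2) * f x = 0"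
  and alpha: "\<alpha> > -1/2" and chi: "chi > 0" and cq: "c\<^sup>2 \<le> (2 * \<alpha> + 1) * chi"
begin

lemma cont_f: "continuous_on S f"
  using d1 by (meson DERIV_continuous continuous_at_imp_continuous_on)
lemma cont_f1: "continuous_on S f1"
  using d2 by (meson DERIV_continuous continuous_at_imp_continuous_on)

lemma uniq:
  assumes f0: "f 0 = 0" and f10: "f1 0 = 0" and x: "0 \<le> x" "x < 1"
  shows "f x = 0"
proof (cases "x = 0")
  case True then show ?thesis using f0 by simp
next
  case False
  with x have x0: "0 < x" by simp
  have hx: "1 - x\<^sup>2 > 0" using pos1[of x] x by simp
  define C where "C = 1 + (4 * (\<alpha> + 1) + chi + c\<^sup>2) / (1 - x\<^sup>2)"
  define E where "E t = (f t)\<^sup>2 + (f1 t)\<^sup>2" for t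
  define G where "G t = E t * exp (- C * t)" for t
  have "G x \<le> G 0"
  proof (rule DERIV_nonpos_imp_nonincreasing[of 0 x G])
    show "0 \<le> x" using x by simp
  next
    fix t assume t: "0 \<le> t" "t \<le> x"
    have ht: "1 - t\<^sup>2 \<ge> 1 - x\<^sup>2"
      using t by (simp add: power_mono)
    have ht0: "1 - t\<^sup>2 > 0" using ht hx by linarith
    have der: "(G has_real_derivative (2 * f t * f1 t + 2 * f1 t * f2 t - C * E t) * exp (- C * t)) (at t)"
    proof -
      have dE: "(E has_real_derivative 2 * f t * f1 t + 2 * f1 t * f2 t) (at t)"
        unfolding E_def by (auto intro!: derivative_eq_intros d1 d2)
      show ?thesis unfolding G_def
        by (rule derivative_eq_intros dE refl | simp add: algebra_simps)+
    qed
    have o: "(1 - t\<^sup>2) * f2 t = 2 * (\<alpha> + 1) * t * f1 t - (chi + c\<^sup>2 * t\<^sup>2) * f t"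
      using ode[of t] t x by simp
    have E0: "E t \<ge> 0" unfolding E_def by simp
    have a1: "\<alpha> + 1 > 0" using alpha by simp
    have s1: "0 \<le> chi + c\<^sup>2 * t\<^sup>2" using chi by (simp add: add_nonneg_nonneg)
    have s2: "chi + c\<^sup>2 * t\<^sup>2 \<le> chi + c\<^sup>2"
    proof -
      have "t\<^sup>2 \<le> 1" using t x by (simp add: abs_square_le_1)
      then show ?thesis by (simp add: mult_left_le)
    qed
    have ff1: "\<bar>2 * f t * f1 t\<bar> \<le> E t"
    proof -
      have "0 \<le> (\<bar>f t\<bar> - \<bar>f1 t\<bar>)\<^sup>2" by simp
      then show ?thesis unfolding E_def by (simp add: power2_eq_square abs_mult algebra_simps)
    qed
    have k1: "(1 - t\<^sup>2) * (2 * f1 t * f2 t) = 2 * (\<alpha> + 1) * t * 2 * (f1 t)\<^sup>2 - (chi + c\<^sup>2 * t\<^sup>2) * (2 * f t * f1 t)"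
    proof -
      have "(1 - t\<^sup>2) * (2 * f1 t * f2 t) = 2 * f1 t * ((1 - t\<^sup>2) * f2 t)" by (simp add: algebra_simps)
      also have "\<dots> = 2 * (\<alpha> + 1) * t * 2 * (f1 t)\<^sup>2 - (chi + c\<^sup>2 * t\<^sup>2) * (2 * f t * f1 t)"
        unfolding o by (simp add: algebra_simps power2_eq_square)
      finally show ?thesis .
    qed
    have k2: "2 * (\<alpha> + 1) * t * 2 * (f1 t)\<^sup>2 \<le> 4 * (\<alpha> + 1) * E t"
    proof -
      have t1: "t \<le> 1" using t x by simp
      have nn: "0 \<le> (\<alpha> + 1) * (f1 t)\<^sup>2" using a1 by simp
      have "t * ((\<alpha> + 1) * (f1 t)\<^sup>2) \<le> 1 * ((\<alpha> + 1) * (f1 t)\<^sup>2)"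
        by (rule mult_right_mono[OF t1 nn])
      moreover have "(\<alpha> + 1) * (f1 t)\<^sup>2 \<le> (\<alpha> + 1) * E t"
        unfolding E_def using a1 by (intro mult_left_mono) auto
      ultimately show ?thesis by (simp add: algebra_simps)
    qed
    have k3: "- ((chi + c\<^sup>2 * t\<^sup>2) * (2 * f t * f1 t)) \<le> (chi + c\<^sup>2) * E t"
    proof -
      have "- (2 * f t * f1 t) \<le> E t" using ff1 by linarith
      then have "(chi + c\<^sup>2 * t\<^sup>2) * (- (2 * f t * f1 t)) \<le> (chi + c\<^sup>2 * t\<^sup>2) * E t"
        by (rule mult_left_mono[OF _ s1])
      also have "\<dots> \<le> (chi + c\<^sup>2) * E t" by (rule mult_right_mono[OF s2 E0])
      finally show ?thesis by simp
    qed
    have k4: "(1 - t\<^sup>2) * (2 * f1 t * f2 t) \<le> (4 * (\<alpha> + 1) + chi + c\<^sup>2) * E t"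
      using k1 k2 k3 by (simp add: algebra_simps)
    have k5: "2 * f1 t * f2 t \<le> (4 * (\<alpha> + 1) + chi + c\<^sup>2) * E t / (1 - x\<^sup>2)"
    proof -
      have nn: "0 \<le> (4 * (\<alpha> + 1) + chi + c\<^sup>2) * E t" using a1 chi E0 by simp
      have "2 * f1 t * f2 t \<le> (4 * (\<alpha> + 1) + chi + c\<^sup>2) * E t / (1 - t\<^sup>2)"
        using k4 ht0 by (simp add: field_simps)
      also have "\<dots> \<le> (4 * (\<alpha> + 1) + chi + c\<^sup>2) * E t / (1 - x\<^sup>2)"
        using nn ht hx by (intro divide_left_mono) auto
      finally show ?thesis .
    qed
    have "2 * f t * f1 t + 2 * f1 t * f2 t \<le> C * E t"
    proof -
      have "C * E t = E t + (4 * (\<alpha> + 1) + chi + c\<^sup>2) * E t / (1 - x\<^sup>2)"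
        unfolding C_def by (simp add: distrib_right)
      then show ?thesis using k5 ff1 by linarith
    qed
    then have "(2 * f t * f1 t + 2 * f1 t * f2 t - C * E t) * exp (- C * t) \<le> 0"
      by (intro mult_nonpos_nonneg) auto
    then show "\<exists>y. (G has_real_derivative y) (at t) \<and> y \<le> 0" using der by blast
  qed
  moreover have "G 0 = 0" unfolding G_def E_def using f0 f10 by simp
  ultimately have "E x \<le> 0" unfolding G_def by (simp add: mult_le_0_iff)
  then show ?thesis unfolding E_def by (smt (verit) zero_le_power2 power2_eq_square mult_eq_0_iff)
qed

lemma a1: "\<alpha> + 1 > 0" using alpha by simp

lemma wronsk0: "f 0 * f1 0 = 0"
proof -
  define V where "V t = f t * (- f1 (-t)) - f1 t * f (-t)" for t
  define Z where "Z t = (1 - t\<^sup>2) powr (\<alpha> + 1) * V t" for t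
  have dfm: "((\<lambda>t. f (-t)) has_real_derivative - f1 (-t)) (at t)" for t
    using DERIV_mirror[of f "f1 (-t)" t] d1 by simp
  have df1m: "((\<lambda>t. f1 (-t)) has_real_derivative - f2 (-t)) (at t)" for t
    using DERIV_mirror[of f1 "f2 (-t)" t] d2 by simp
  have dV: "(V has_real_derivative f t * f2 (-t) - f2 t * f (-t)) (at t)" for t
  proof -
    have "(V has_real_derivative (f t * (- (- f2 (-t))) + f1 t * (- f1 (-t))) - (f1 t * (- f1 (-t)) + f2 t * f (-t))) (at t)"
      unfolding V_def
      by (intro DERIV_diff DERIV_mult' DERIV_minus d1 d2 dfm df1m)
    then show ?thesis by (simp add: algebra_simps)
  qed
  have contV: "continuous_on S V" for S
    using dV by (meson DERIV_continuous continuous_at_imp_continuous_on)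
  have dZ: "(Z has_real_derivative 0) (at t)" if t: "-1 < t" "t < 1" for t
  proof -
    have ht: "1 - t\<^sup>2 > 0" using pos1 t by simp
    have "(Z has_real_derivative (1 - t\<^sup>2) powr (\<alpha> + 1) * (f t * f2 (-t) - f2 t * f (-t)) + (\<alpha> + 1) * (1 - t\<^sup>2) powr (\<alpha> + 1 - 1) * (- 2 * t) * V t) (at t)"
      unfolding Z_def by (intro DERIV_mult' dpow t dV)
    moreover have "(1 - t\<^sup>2) powr (\<alpha> + 1) * (f t * f2 (-t) - f2 t * f (-t)) + (\<alpha> + 1) * (1 - t\<^sup>2) powr (\<alpha> + 1 - 1) * (- 2 * t) * V t = 0"
    proof -
      have o1: "(1 - t\<^sup>2) * f2 t = 2 * (\<alpha> + 1) * t * f1 t - (chi + c\<^sup>2 * t\<^sup>2) * f t"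
        using ode[of t] t by simp
      have o2: "(1 - t\<^sup>2) * f2 (-t) = - 2 * (\<alpha> + 1) * t * f1 (-t) - (chi + c\<^sup>2 * t\<^sup>2) * f (-t)"
        using ode[of "-t"] t by (simp add: algebra_simps)
      have pw: "(1 - t\<^sup>2) powr (\<alpha> + 1) = (1 - t\<^sup>2) powr \<alpha> * (1 - t\<^sup>2)"
        using ht by (simp add: powr_succ)
      have "(1 - t\<^sup>2) * (f t * f2 (-t) - f2 t * f (-t)) = f t * ((1 - t\<^sup>2) * f2 (-t)) - ((1 - t\<^sup>2) * f2 t) * f (-t)"
        by (simp add: algebra_simps)
      also have "\<dots> = 2 * (\<alpha> + 1) * t * V t"
        unfolding o1 o2 V_def by (simp add: algebra_simps)
      finally have k: "(1 - t\<^sup>2) * (f t * f2 (-t) - f2 t * f (-t)) = 2 * (\<alpha> + 1) * t * V t" .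
      have "(1 - t\<^sup>2) powr (\<alpha> + 1) * (f t * f2 (-t) - f2 t * f (-t)) = (1 - t\<^sup>2) powr \<alpha> * (2 * (\<alpha> + 1) * t * V t)"
        unfolding pw k[symmetric] by (simp only: mult.assoc)
      moreover have "(\<alpha> + 1) * (1 - t\<^sup>2) powr (\<alpha> + 1 - 1) * (- 2 * t) * V t = - ((1 - t\<^sup>2) powr \<alpha> * (2 * (\<alpha> + 1) * t * V t))"
        by simp
      ultimately show ?thesis by linarith
    qed
    ultimately show ?thesis by simp
  qed
  have Zc: "Z x = Z 0" if x: "0 \<le> x" "x < 1" for x
  proof (cases "x = 0")
    case True then show ?thesis by simp
  next
    case False
    show ?thesis
    proof (rule DERIV_isconst2[of 0 x Z x])
      show "0 < x" using x False by simp
      show "continuous_on {0..x} Z"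
        unfolding Z_def
        by (intro continuous_intros contV continuous_on_powr') (use x in \<open>auto simp: abs_square_le_1 a1\<close>)
      show "\<And>y. 0 < y \<Longrightarrow> y < x \<Longrightarrow> (Z has_real_derivative 0) (at y)"
        using x by (intro dZ) auto
    qed (use x in auto)
  qed
  obtain B where B: "\<forall>x\<in>{-1..1}. \<bar>V x\<bar> \<le> B" using bounded_cont[OF contV] by blast
  have "((\<lambda>x. B * (1 - x\<^sup>2) powr (\<alpha> + 1)) \<longlongrightarrow> B * 0) (at_left 1)"
    by (intro tendsto_mult tendsto_const p_tendsto a1)
  moreover have "((\<lambda>x. \<bar>V 0\<bar>) \<longlongrightarrow> \<bar>V 0\<bar>) (at_left 1)" by simp
  moreover have "eventually (\<lambda>x. \<bar>V 0\<bar> \<le> B * (1 - x\<^sup>2) powr (\<alpha> + 1)) (at_left (1::real))"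
  proof -
    have "eventually (\<lambda>x. x \<in> {0<..<1}) (at_left (1::real))"
      by (rule eventually_at_left_real) simp
    then show ?thesis
    proof (rule eventually_mono)
      fix x :: real assume x: "x \<in> {0<..<1}"
      have "V 0 = Z 0" unfolding Z_def by simp
      also have "\<dots> = Z x" using Zc[of x] x by simp
      finally have "\<bar>V 0\<bar> = (1 - x\<^sup>2) powr (\<alpha> + 1) * \<bar>V x\<bar>" unfolding Z_def by (simp add: abs_mult)
      also have "\<dots> \<le> (1 - x\<^sup>2) powr (\<alpha> + 1) * B" using B x by (intro mult_left_mono) auto
      finally show "\<bar>V 0\<bar> \<le> B * (1 - x\<^sup>2) powr (\<alpha> + 1)" by (simp add: mult.commute)
    qed
  qed
  ultimately have "\<bar>V 0\<bar> \<le> B * 0"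
    by (rule tendsto_le[OF trivial_limit_at_left_real])
  then have "V 0 = 0" by simp
  then show ?thesis unfolding V_def by simp
qed

lemma symm: "\<exists>\<epsilon>. (\<epsilon> = 1 \<or> \<epsilon> = -1) \<and> (\<forall>x\<in>{-1..1}. f (-x) = \<epsilon> * f x)"
proof -
  define \<epsilon> :: real where "\<epsilon> = (if f1 0 = 0 then 1 else -1)"
  have e: "\<epsilon> = 1 \<or> \<epsilon> = -1" unfolding \<epsilon>_def by simp
  have ee: "\<epsilon> * \<epsilon> = 1" using e by auto
  define u where "u t = f t - \<epsilon> * f (-t)" for t
  define u1 where "u1 t = f1 t + \<epsilon> * f1 (-t)" for t
  define u2 where "u2 t = f2 t - \<epsilon> * f2 (-t)" for t
  have dfm: "((\<lambda>t. f (-t)) has_real_derivative - f1 (-t)) (at t)" for t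
    using DERIV_mirror[of f "f1 (-t)" t] d1 by simp
  have df1m: "((\<lambda>t. f1 (-t)) has_real_derivative - f2 (-t)) (at t)" for t
    using DERIV_mirror[of f1 "f2 (-t)" t] d2 by simp
  interpret U: ode_sol u u1 u2 \<alpha> chi c
  proof
    fix x
    have "(u has_real_derivative f1 x - \<epsilon> * (- f1 (-x))) (at x)"
      unfolding u_def by (intro DERIV_diff DERIV_cmult d1 dfm)
    then show "(u has_real_derivative u1 x) (at x)" unfolding u1_def by simp
    have "(u1 has_real_derivative f2 x + \<epsilon> * (- f2 (-x))) (at x)"
      unfolding u1_def by (intro DERIV_add DERIV_cmult d2 df1m)
    then show "(u1 has_real_derivative u2 x) (at x)" unfolding u2_def by simp
  next
    fix x :: real assume x: "-1 < x" "x < 1"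
    have o1: "(1 - x\<^sup>2) * f2 x - 2 * (\<alpha> + 1) * x * f1 x + (chi + c\<^sup>2 * x\<^sup>2) * f x = 0"
      using ode x by simp
    have o2: "(1 - x\<^sup>2) * f2 (-x) + 2 * (\<alpha> + 1) * x * f1 (-x) + (chi + c\<^sup>2 * x\<^sup>2) * f (-x) = 0"
      using ode[of "-x"] x by simp
    have "(1 - x\<^sup>2) * u2 x - 2 * (\<alpha> + 1) * x * u1 x + (chi + c\<^sup>2 * x\<^sup>2) * u x
      = ((1 - x\<^sup>2) * f2 x - 2 * (\<alpha> + 1) * x * f1 x + (chi + c\<^sup>2 * x\<^sup>2) * f x)
        - \<epsilon> * ((1 - x\<^sup>2) * f2 (-x) + 2 * (\<alpha> + 1) * x * f1 (-x) + (chi + c\<^sup>2 * x\<^sup>2) * f (-x))"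
      unfolding u_def u1_def u2_def by (simp add: algebra_simps)
    then show "(1 - x\<^sup>2) * u2 x - 2 * (\<alpha> + 1) * x * u1 x + (chi + c\<^sup>2 * x\<^sup>2) * u x = 0"
      using o1 o2 by simp
  qed (use alpha chi cq in auto)
  have u0: "u 0 = 0" and u10: "u1 0 = 0"
    using wronsk0 unfolding u_def u1_def \<epsilon>_def by auto
  have uz: "u x = 0" if "0 \<le> x" "x < 1" for x
    using U.uniq[OF u0 u10 that] .
  have u1z: "u 1 = 0"
  proof -
    have "(u \<longlongrightarrow> u 1) (at_left 1)"
      using has_field_derivative_at_within[OF U.d1[of 1], of "{..<1}"] DERIV_continuous[of u "u1 1" 1 "{..<1}"]
      by (simp add: continuous_within)
    moreover have "(u \<longlongrightarrow> 0) (at_left 1)"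
    proof (rule tendsto_eventually)
      have "eventually (\<lambda>x. x \<in> {0<..<1}) (at_left (1::real))"
        by (rule eventually_at_left_real) simp
      then show "eventually (\<lambda>x. u x = 0) (at_left (1::real))"
        by (rule eventually_mono) (use uz in auto)
    qed
    ultimately show ?thesis using tendsto_unique[OF trivial_limit_at_left_real] by blast
  qed
  have uz': "u x = 0" if "0 \<le> x" "x \<le> 1" for x
    using uz u1z that by (cases "x = 1") auto
  have "\<forall>x\<in>{-1..1}. f (-x) = \<epsilon> * f x"
  proof
    fix x :: real assume x: "x \<in> {-1..1}"
    show "f (-x) = \<epsilon> * f x"
    proof (cases "x \<ge> 0")
      case True
      then have "f x = \<epsilon> * f (-x)" using uz'[of x] x unfolding u_def by simp
      then have "\<epsilon> * f x = \<epsilon> * \<epsilon> * f (-x)" by simp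
      then show ?thesis using ee by simp
    next
      case False
      then show ?thesis using uz'[of "-x"] x unfolding u_def by simp
    qed
  qed
  then show ?thesis using e by blast
qed

lemma sonin_mono:
  assumes xy: "0 \<le> x" "x \<le> y" "y < 1"
  shows "(f x)\<^sup>2 + (1 - x\<^sup>2) * (f1 x)\<^sup>2 / (chi + c\<^sup>2 * x\<^sup>2) \<le> (f y)\<^sup>2 + (1 - y\<^sup>2) * (f1 y)\<^sup>2 / (chi + c\<^sup>2 * y\<^sup>2)"
    (is "?K x \<le> ?K y")
proof (rule DERIV_nonneg_imp_nondecreasing[of x y ?K])
  show "x \<le> y" using xy by simp
next
  fix t assume t: "x \<le> t" "t \<le> y"
  define s where "s = chi + c\<^sup>2 * t\<^sup>2"
  have s0: "s > 0" unfolding s_def using chi by (simp add: add_pos_nonneg)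
  have t0: "0 \<le> t" "t < 1" using t xy by auto
  have der: "(?K has_real_derivative 2 * f t * f1 t + (((- 2 * t) * (f1 t)\<^sup>2 + (1 - t\<^sup>2) * (2 * f1 t * f2 t)) * s - (1 - t\<^sup>2) * (f1 t)\<^sup>2 * (2 * c\<^sup>2 * t)) / (s * s)) (at t)"
    unfolding s_def
    by (rule derivative_eq_intros d1 d2 refl | (use s0 in \<open>simp add: s_def\<close>))+
  have o: "(1 - t\<^sup>2) * f2 t = 2 * (\<alpha> + 1) * t * f1 t - s * f t"
    using ode[of t] t0 unfolding s_def by simp
  have num: "2 * f t * f1 t * (s * s) + (((- 2 * t) * (f1 t)\<^sup>2 + (1 - t\<^sup>2) * (2 * f1 t * f2 t)) * s - (1 - t\<^sup>2) * (f1 t)\<^sup>2 * (2 * c\<^sup>2 * t))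
      = 2 * t * (f1 t)\<^sup>2 * ((2 * \<alpha> + 1) * s - c\<^sup>2 * (1 - t\<^sup>2))"
  proof -
    have "(1 - t\<^sup>2) * (2 * f1 t * f2 t) = 2 * f1 t * ((1 - t\<^sup>2) * f2 t)" by (simp add: algebra_simps)
    also have "\<dots> = 2 * f1 t * (2 * (\<alpha> + 1) * t * f1 t - s * f t)" by (simp only: o)
    finally have e: "(1 - t\<^sup>2) * (2 * f1 t * f2 t) = 2 * f1 t * (2 * (\<alpha> + 1) * t * f1 t - s * f t)" .
    show ?thesis unfolding e by (simp add: algebra_simps power2_eq_square)
  qed
  have nn: "0 \<le> 2 * t * (f1 t)\<^sup>2 * ((2 * \<alpha> + 1) * s - c\<^sup>2 * (1 - t\<^sup>2))"
  proof -
    have "c\<^sup>2 * (1 - t\<^sup>2) \<le> c\<^sup>2" by (simp add: mult_left_le)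
    also have "\<dots> \<le> (2 * \<alpha> + 1) * chi" using cq .
    also have "\<dots> \<le> (2 * \<alpha> + 1) * s" using alpha unfolding s_def by (intro mult_left_mono) auto
    finally show ?thesis using t0 by simp
  qed
  have "2 * f t * f1 t + (((- 2 * t) * (f1 t)\<^sup>2 + (1 - t\<^sup>2) * (2 * f1 t * f2 t)) * s - (1 - t\<^sup>2) * (f1 t)\<^sup>2 * (2 * c\<^sup>2 * t)) / (s * s)
      = 2 * t * (f1 t)\<^sup>2 * ((2 * \<alpha> + 1) * s - c\<^sup>2 * (1 - t\<^sup>2)) / (s * s)"
    using s0 num[symmetric] by (simp add: field_simps)
  also have "\<dots> \<ge> 0" using nn s0 by simp
  finally show "\<exists>d. (?K has_real_derivative d) (at t) \<and> 0 \<le> d" using der by (intro exI conjI) auto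
qed

lemma sup_at_1:
  assumes x: "x \<in> {-1..1}"
  shows "\<bar>f x\<bar> \<le> \<bar>f 1\<bar>"
proof -
  have main: "\<bar>f x\<bar> \<le> \<bar>f 1\<bar>" if x: "0 \<le> x" "x \<le> 1" for x
  proof (cases "x = 1")
    case True then show ?thesis by simp
  next
    case False
    with x have x1: "x < 1" by simp
    obtain B where B: "\<forall>x\<in>{-1..1}. \<bar>f1 x\<bar> \<le> B" using bounded_cont[OF cont_f1] by blast
    have lim: "((\<lambda>y. (f y)\<^sup>2 + (1 - y\<^sup>2) * B\<^sup>2 / chi) \<longlongrightarrow> (f 1)\<^sup>2 + (1 - 1\<^sup>2) * B\<^sup>2 / chi) (at_left 1)"
    proof -
      have "isCont (\<lambda>y. (f y)\<^sup>2 + (1 - y\<^sup>2) * B\<^sup>2 / chi) 1"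
        using DERIV_isCont[OF d1[of 1]] chi by (intro continuous_intros) auto
      then have "((\<lambda>y. (f y)\<^sup>2 + (1 - y\<^sup>2) * B\<^sup>2 / chi) \<longlongrightarrow> (f 1)\<^sup>2 + (1 - 1\<^sup>2) * B\<^sup>2 / chi) (at 1)"
        by (simp add: isCont_def)
      then show ?thesis by (rule tendsto_mono[OF at_le[of "{..<1}" UNIV], rotated]) simp
    qed
    have ev: "eventually (\<lambda>y. (f x)\<^sup>2 \<le> (f y)\<^sup>2 + (1 - y\<^sup>2) * B\<^sup>2 / chi) (at_left (1::real))"
    proof -
      have "eventually (\<lambda>y. y \<in> {x<..<1}) (at_left (1::real))"
        by (rule eventually_at_left_real) (use x1 in simp)
      then show ?thesis
      proof (rule eventually_mono)
        fix y assume y: "y \<in> {x<..<1}"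
        have "(f x)\<^sup>2 \<le> (f x)\<^sup>2 + (1 - x\<^sup>2) * (f1 x)\<^sup>2 / (chi + c\<^sup>2 * x\<^sup>2)"
          using x chi by (simp add: abs_square_le_1 add_pos_nonneg)
        also have "\<dots> \<le> (f y)\<^sup>2 + (1 - y\<^sup>2) * (f1 y)\<^sup>2 / (chi + c\<^sup>2 * y\<^sup>2)"
          using sonin_mono[of x y] x y by simp
        also have "(1 - y\<^sup>2) * (f1 y)\<^sup>2 / (chi + c\<^sup>2 * y\<^sup>2) \<le> (1 - y\<^sup>2) * B\<^sup>2 / chi"
        proof -
          have y1: "0 \<le> 1 - y\<^sup>2" using y x by (simp add: abs_square_le_1)
          have "\<bar>f1 y\<bar> \<le> B" using B y x by auto
          moreover have "0 \<le> B" using \<open>\<bar>f1 y\<bar> \<le> B\<close> abs_ge_zero[of "f1 y"] by linarith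
          ultimately have "(f1 y)\<^sup>2 \<le> B\<^sup>2" using abs_le_square_iff[of "f1 y" B] by simp
          then have "(1 - y\<^sup>2) * (f1 y)\<^sup>2 \<le> (1 - y\<^sup>2) * B\<^sup>2" using y1 by (rule mult_left_mono)
          moreover have "chi \<le> chi + c\<^sup>2 * y\<^sup>2" by simp
          ultimately show ?thesis using chi y1
            by (intro frac_le) (use chi y1 in auto)
        qed
        finally show "(f x)\<^sup>2 \<le> (f y)\<^sup>2 + (1 - y\<^sup>2) * B\<^sup>2 / chi" by simp
      qed
    qed
    have "(f x)\<^sup>2 \<le> (f 1)\<^sup>2 + (1 - 1\<^sup>2) * B\<^sup>2 / chi"
      by (rule tendsto_le[OF trivial_limit_at_left_real lim tendsto_const ev])
    then have "(f x)\<^sup>2 \<le> (f 1)\<^sup>2" by simp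
    then show ?thesis using abs_le_square_iff[of "f x" "f 1"] by simp
  qed
  show ?thesis
  proof (cases "x \<ge> 0")
    case True then show ?thesis using main x by simp
  next
    case False
    obtain \<epsilon> where e: "\<epsilon> = 1 \<or> \<epsilon> = -1" "\<forall>x\<in>{-1..1}. f (-x) = \<epsilon> * f x" using symm by blast
    have "\<bar>f x\<bar> = \<bar>f (-x)\<bar>" using e x by (auto simp: abs_mult)
    then show ?thesis using main[of "-x"] False x by simp
  qed
qed

end

lemma aux_frac1: "(a::real) \<noteq> 0 \<Longrightarrow> z \<noteq> 0 \<Longrightarrow> A * D / (2 * a * z) = 2 * (A * (D / (4 * a))) / z"
  by (simp add: field_simps)

context ode_sol begin

lemma p_cont: "continuous_on {-1..1} (\<lambda>t::real. (1 - t\<^sup>2) powr b)" if "b > 0" for b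
  by (rule continuous_on_powr') (use that in \<open>auto intro!: continuous_intros simp: abs_square_le_1\<close>)

lemma step1:
  assumes A: "\<forall>x\<in>{-1..1}. f x \<le> A" and A0: "0 \<le> A" and s: "0 < s" "s < 1"
  shows "f1 s \<le> A * (chi + c\<^sup>2) / (2 * (\<alpha> + 1) * s)"
proof -
  define L where "L = chi + c\<^sup>2"
  define p where "p t = (1 - t\<^sup>2) powr (\<alpha> + 1)" for t
  define m where "m t = A * L / (2 * (\<alpha> + 1) * s) * p t - p t * f1 t" for t
  have L0: "L \<ge> 0" unfolding L_def using chi by simp
  have pc: "continuous_on {s..1} p"
    using p_cont[OF a1] unfolding p_def
    by (rule continuous_on_subset) (use s in auto)
  have mc: "continuous_on {s..1} m"
    unfolding m_def by (intro continuous_intros pc cont_f1) (use s a1 in auto)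
  have dm: "(m has_real_derivative A * L / (2 * (\<alpha> + 1) * s) * ((\<alpha> + 1) * (1 - t\<^sup>2) powr (\<alpha> + 1 - 1) * (- 2 * t))
       - (p t * f2 t + (\<alpha> + 1) * (1 - t\<^sup>2) powr (\<alpha> + 1 - 1) * (- 2 * t) * f1 t)) (at t)"
    if t: "-1 < t" "t < 1" for t
  proof -
    have dp: "(p has_real_derivative (\<alpha> + 1) * (1 - t\<^sup>2) powr (\<alpha> + 1 - 1) * (- 2 * t)) (at t)"
      unfolding p_def by (rule dpow[OF t])
    have "((\<lambda>t. A * L / (2 * (\<alpha> + 1) * s) * p t) has_real_derivative A * L / (2 * (\<alpha> + 1) * s) * ((\<alpha> + 1) * (1 - t\<^sup>2) powr (\<alpha> + 1 - 1) * (- 2 * t))) (at t)"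
      by (rule DERIV_cmult[OF dp])
    moreover have "((\<lambda>t. p t * f1 t) has_real_derivative p t * f2 t + (\<alpha> + 1) * (1 - t\<^sup>2) powr (\<alpha> + 1 - 1) * (- 2 * t) * f1 t) (at t)"
      by (rule DERIV_mult'[OF dp d2])
    ultimately show ?thesis unfolding m_def by (rule DERIV_diff)
  qed
  obtain l z where z: "s < z" "z < 1" and dz: "(m has_real_derivative l) (at z)" and mv: "m 1 - m s = (1 - s) * l"
  proof -
    have "m differentiable (at x)" if "s < x" "x < 1" for x
      using dm[of x] s that unfolding real_differentiable_def by auto
    then show ?thesis using MVT[OF s(2) mc] that by blast
  qed
  have zz: "-1 < z" using z s by simp
  have l: "l = A * L / (2 * (\<alpha> + 1) * s) * ((\<alpha> + 1) * (1 - z\<^sup>2) powr (\<alpha> + 1 - 1) * (- 2 * z))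
       - (p z * f2 z + (\<alpha> + 1) * (1 - z\<^sup>2) powr (\<alpha> + 1 - 1) * (- 2 * z) * f1 z)"
    using DERIV_unique[OF dz dm[OF zz z(2)]] .
  have l0: "l \<le> 0"
  proof -
    define w where "w = (1 - z\<^sup>2) powr \<alpha>"
    have hz: "1 - z\<^sup>2 > 0" using pos1 zz z by simp
    have w0: "w \<ge> 0" unfolding w_def by simp
    have pz: "p z = w * (1 - z\<^sup>2)" unfolding p_def w_def using hz by (simp add: powr_succ)
    have o: "(1 - z\<^sup>2) * f2 z = 2 * (\<alpha> + 1) * z * f1 z - (chi + c\<^sup>2 * z\<^sup>2) * f z"
      using ode[OF zz z(2)] by simp
    have "l = w * ((chi + c\<^sup>2 * z\<^sup>2) * f z - A * L * z / s)"
    proof -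
      have nz: "2 * (\<alpha> + 1) * s \<noteq> 0" "s \<noteq> 0" "\<alpha> + 1 \<noteq> 0" using a1 s by simp_all
      have t1: "A * L / (2 * (\<alpha> + 1) * s) * ((\<alpha> + 1) * w * (- 2 * z)) = - (w * (A * L * z / s))"
        using nz by (simp add: field_simps)
      have t2: "p z * f2 z + (\<alpha> + 1) * w * (- 2 * z) * f1 z = - (w * ((chi + c\<^sup>2 * z\<^sup>2) * f z))"
      proof -
        have "p z * f2 z = w * ((1 - z\<^sup>2) * f2 z)" unfolding pz by simp
        also have "\<dots> = w * (2 * (\<alpha> + 1) * z * f1 z - (chi + c\<^sup>2 * z\<^sup>2) * f z)" unfolding o ..
        finally show ?thesis by (simp add: algebra_simps)
      qed
      have "l = A * L / (2 * (\<alpha> + 1) * s) * ((\<alpha> + 1) * w * (- 2 * z)) - (p z * f2 z + (\<alpha> + 1) * w * (- 2 * z) * f1 z)"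
        unfolding l w_def by simp
      also have "\<dots> = w * ((chi + c\<^sup>2 * z\<^sup>2) * f z - A * L * z / s)"
        unfolding t1 t2 by (simp add: algebra_simps)
      finally show ?thesis .
    qed
    moreover have "(chi + c\<^sup>2 * z\<^sup>2) * f z - A * L * z / s \<le> 0"
    proof -
      have fz: "f z \<le> A" using A zz z by auto
      have sz: "0 \<le> chi + c\<^sup>2 * z\<^sup>2" using chi by (simp add: add_nonneg_nonneg)
      have "(chi + c\<^sup>2 * z\<^sup>2) * f z \<le> (chi + c\<^sup>2 * z\<^sup>2) * A" by (rule mult_left_mono[OF fz sz])
      also have "\<dots> \<le> L * A"
      proof (rule mult_right_mono[OF _ A0])
        have "z\<^sup>2 \<le> 1" using zz z by (simp add: abs_square_le_1)
        then show "chi + c\<^sup>2 * z\<^sup>2 \<le> L" unfolding L_def by (simp add: mult_left_le)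
      qed
      also have "\<dots> \<le> A * L * z / s"
      proof -
        have "1 \<le> z / s" using z s by simp
        then have "L * A * 1 \<le> L * A * (z / s)" using L0 A0 by (intro mult_left_mono) auto
        then show ?thesis by (simp add: mult.commute)
      qed
      finally show ?thesis by simp
    qed
    ultimately show ?thesis using w0 by (simp add: mult_nonneg_nonpos)
  qed
  have m1: "m 1 = 0" unfolding m_def p_def by simp
  have "(1 - s) * l \<le> 0" using l0 s by (simp add: mult_nonneg_nonpos)
  then have "m s \<ge> 0" using mv m1 by simp
  moreover have ps: "p s > 0" unfolding p_def using pos1[of s] s by simp
  ultimately have "p s * f1 s \<le> p s * (A * L / (2 * (\<alpha> + 1) * s))" unfolding m_def by (simp add: mult.commute)
  then have "f1 s \<le> A * L / (2 * (\<alpha> + 1) * s)" using ps by (simp only: mult_le_cancel_left_pos)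
  then show ?thesis unfolding L_def .
qed

lemma step2:
  assumes A: "\<forall>x\<in>{-1..1}. f x \<le> A" and A1: "f 1 = A" and A0: "0 \<le> A" and x: "0 < x" "x \<le> 1"
  shows "A - A * ((chi + c\<^sup>2) / (4 * (\<alpha> + 1))) * (1 / x\<^sup>2 - 1) \<le> f x"
proof (cases "x = 1")
  case True then show ?thesis using A1 by simp
next
  case False
  with x have x1: "x < 1" by simp
  define B where "B = A * ((chi + c\<^sup>2) / (4 * (\<alpha> + 1)))"
  have B0: "B \<ge> 0" unfolding B_def using A0 chi a1 by simp
  define n where "n t = f t + B / t\<^sup>2" for t
  have dn: "(n has_real_derivative f1 t - 2 * B / t ^ 3) (at t)" if "t > 0" for t
    unfolding n_def using that
    by (auto intro!: derivative_eq_intros d1 simp: field_simps power2_eq_square power3_eq_cube)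
  have nc: "continuous_on {x..1} n"
  proof -
    have "\<forall>t\<in>{x..1}. isCont n t" using dn x by (meson DERIV_isCont atLeastAtMost_iff less_le_trans)
    then show ?thesis by (simp add: continuous_at_imp_continuous_on)
  qed
  obtain l z where z: "x < z" "z < 1" and dz: "(n has_real_derivative l) (at z)" and mv: "n 1 - n x = (1 - x) * l"
  proof -
    have "n differentiable (at t)" if "x < t" "t < 1" for t
      using dn[of t] x that unfolding real_differentiable_def by auto
    then show ?thesis using MVT[OF x1 nc] that by blast
  qed
  have z0: "z > 0" using z x by simp
  have l: "l = f1 z - 2 * B / z ^ 3" using DERIV_unique[OF dz dn[OF z0]] .
  have "f1 z \<le> A * (chi + c\<^sup>2) / (2 * (\<alpha> + 1) * z)" using step1[OF A A0 z0 z(2)] .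
  also have "\<dots> = 2 * B / z" unfolding B_def using a1 z0 by (intro aux_frac1) auto
  also have "\<dots> \<le> 2 * B / z ^ 3"
  proof (rule divide_left_mono)
    have "z ^ 3 \<le> z ^ 1" using z z0 by (intro power_decreasing) auto
    then show "z ^ 3 \<le> z" by simp
  qed (use B0 z0 in auto)
  finally have "l \<le> 0" unfolding l by simp
  then have "(1 - x) * l \<le> 0" using x1 by (simp add: mult_nonneg_nonpos)
  then have "n 1 \<le> n x" using mv by simp
  then have "A + B \<le> f x + B / x\<^sup>2" unfolding n_def using A1 by simp
  then show ?thesis unfolding B_def[symmetric] by (simp add: algebra_simps)
qed

end
lemma aux_frac2: "(a::real) > 0 \<Longrightarrow> 1 / a - 2 / (a + 1) + 1 / (a + 2) = 2 / (a * (a + 1) * (a + 2))"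
proof -
  assume a: "a > 0"
  then have n: "a \<noteq> 0" "a + 1 \<noteq> 0" "a + 2 \<noteq> 0" "1 + a \<noteq> 0" "a * (a + 1) * (a + 2) \<noteq> 0" by simp_all
  have D: "(1 / a - 2 / (a + 1) + 1 / (a + 2)) * (a * (a + 1) * (a + 2)) = 2"
  proof -
    have q1: "(1 / a) * (a * (a + 1) * (a + 2)) = (a + 1) * (a + 2)" using n by simp
    have q2: "(2 / (a + 1)) * (a * (a + 1) * (a + 2)) = 2 * (a * (a + 2))" using n by simp
    have q3: "(1 / (a + 2)) * (a * (a + 1) * (a + 2)) = a * (a + 1)" using n by simp
    have "(1 / a - 2 / (a + 1) + 1 / (a + 2)) * (a * (a + 1) * (a + 2))
       = (1 / a) * (a * (a + 1) * (a + 2)) - (2 / (a + 1)) * (a * (a + 1) * (a + 2)) + (1 / (a + 2)) * (a * (a + 1) * (a + 2))"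
      by (simp only: distrib_right left_diff_distrib)
    also have "\<dots> = (a + 1) * (a + 2) - 2 * (a * (a + 2)) + a * (a + 1)" unfolding q1 q2 q3 ..
    also have "\<dots> = 2" by (simp add: algebra_simps)
    finally show ?thesis .
  qed
  then show ?thesis using n(5) by (simp add: eq_divide_eq)
qed

lemma aux_ring: "- (1 / 2) * (P * (- 2 * t) - 2 * K * (P * v * (- 2 * t)) + K\<^sup>2 * (P * v\<^sup>2 * (- 2 * t))) = t * (P * (1 - K * v)\<^sup>2)"
  for P t K v :: real
  by (simp add: power2_eq_square algebra_simps)

lemma antider:
  fixes \<alpha> K :: real
  assumes a: "\<alpha> > -1" and K: "K \<ge> 1"
  shows "((\<lambda>t. t * ((1 - t\<^sup>2) powr \<alpha> * (1 - K * (1 - t\<^sup>2))\<^sup>2)) has_integral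
           ((1 / K) powr (\<alpha> + 1) / ((\<alpha> + 1) * (\<alpha> + 2) * (\<alpha> + 3)))) {sqrt (1 - 1 / K)..1}"
proof -
  define x0 where "x0 = sqrt (1 - 1 / K)"
  have K0: "K > 0" using K by simp
  have q: "0 \<le> 1 - 1 / K" "1 - 1 / K < 1" using K K0 by (simp_all add: field_simps)
  have x0: "0 \<le> x0" "x0 < 1" unfolding x0_def using q by (simp_all add: real_sqrt_lt_1_iff)
  have x0sq: "x0\<^sup>2 = 1 - 1 / K" unfolding x0_def using q by simp
  define G where "G t = - (1 / 2) * ((1 - t\<^sup>2) powr (\<alpha> + 1) * (1 / (\<alpha> + 1)) - (2 * K / (\<alpha> + 2)) * (1 - t\<^sup>2) powr (\<alpha> + 2)
      + (K\<^sup>2 / (\<alpha> + 3)) * (1 - t\<^sup>2) powr (\<alpha> + 3))" for t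
  have a1: "\<alpha> + 1 > 0" "\<alpha> + 2 > 0" "\<alpha> + 3 > 0" using a by simp_all
  have "((\<lambda>t. t * ((1 - t\<^sup>2) powr \<alpha> * (1 - K * (1 - t\<^sup>2))\<^sup>2)) has_integral (G 1 - G x0)) {x0..1}"
  proof (rule fundamental_theorem_of_calculus_interior)
    show "x0 \<le> 1" using x0 by simp
    have c: "continuous_on {x0..1} (\<lambda>t::real. (1 - t\<^sup>2) powr b)" if "b > 0" for b
      by (rule continuous_on_powr') (use that x0 in \<open>auto intro!: continuous_intros simp: abs_square_le_1\<close>)
    show "continuous_on {x0..1} G"
      unfolding G_def using c[OF a1(1)] c[OF a1(2)] c[OF a1(3)]
      by (intro continuous_on_mult continuous_on_add continuous_on_diff continuous_on_const)
  next
    fix t assume t: "t \<in> {x0<..<1}"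
    then have t1: "-1 < t" "t < 1" using x0 by auto
    define v where "v = 1 - t\<^sup>2"
    have v0: "v > 0" unfolding v_def using pos1 t1 by simp
    have e1: "\<alpha> + 1 - 1 = \<alpha>" "\<alpha> + 2 - 1 = \<alpha> + 1" "\<alpha> + 3 - 1 = \<alpha> + 2" by simp_all
    have d: "((\<lambda>t. (1 - t\<^sup>2) powr (\<alpha> + k)) has_real_derivative (\<alpha> + k) * (1 - t\<^sup>2) powr (\<alpha> + k - 1) * (- 2 * t)) (at t)" for k
      by (rule dpow[OF t1])
    have "(G has_real_derivative - (1 / 2) * ((\<alpha> + 1) * (1 - t\<^sup>2) powr (\<alpha> + 1 - 1) * (- 2 * t) * (1 / (\<alpha> + 1))
          - (2 * K / (\<alpha> + 2)) * ((\<alpha> + 2) * (1 - t\<^sup>2) powr (\<alpha> + 2 - 1) * (- 2 * t))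
          + (K\<^sup>2 / (\<alpha> + 3)) * ((\<alpha> + 3) * (1 - t\<^sup>2) powr (\<alpha> + 3 - 1) * (- 2 * t)))) (at t)"
      unfolding G_def
      by (intro DERIV_cmult DERIV_add DERIV_diff DERIV_cmult_right d)
    moreover have "- (1 / 2) * ((\<alpha> + 1) * (1 - t\<^sup>2) powr (\<alpha> + 1 - 1) * (- 2 * t) * (1 / (\<alpha> + 1))
          - (2 * K / (\<alpha> + 2)) * ((\<alpha> + 2) * (1 - t\<^sup>2) powr (\<alpha> + 2 - 1) * (- 2 * t))
          + (K\<^sup>2 / (\<alpha> + 3)) * ((\<alpha> + 3) * (1 - t\<^sup>2) powr (\<alpha> + 3 - 1) * (- 2 * t)))
        = t * ((1 - t\<^sup>2) powr \<alpha> * (1 - K * (1 - t\<^sup>2))\<^sup>2)"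
    proof -
      have p1: "v powr (\<alpha> + 1) = v powr \<alpha> * v" using v0 by (simp add: powr_add)
      have p2: "v powr (\<alpha> + 2) = v powr \<alpha> * v\<^sup>2" using v0 by (simp add: powr_add powr_numeral)
      have n: "\<alpha> + 1 \<noteq> 0" "\<alpha> + 2 \<noteq> 0" "\<alpha> + 3 \<noteq> 0" using a1 by simp_all
      have T1: "(\<alpha> + 1) * v powr \<alpha> * (- 2 * t) * (1 / (\<alpha> + 1)) = v powr \<alpha> * (- 2 * t)"
        using n(1) by simp
      have T2: "(2 * K / (\<alpha> + 2)) * ((\<alpha> + 2) * v powr (\<alpha> + 1) * (- 2 * t)) = 2 * K * (v powr (\<alpha> + 1) * (- 2 * t))"
        using n(2) by simp
      have T3: "(K\<^sup>2 / (\<alpha> + 3)) * ((\<alpha> + 3) * v powr (\<alpha> + 2) * (- 2 * t)) = K\<^sup>2 * (v powr (\<alpha> + 2) * (- 2 * t))"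
        using n(3) by simp
      show ?thesis unfolding e1 v_def[symmetric] T1 T2 T3 unfolding p1 p2
        by (rule aux_ring)
    qed
    ultimately show "(G has_vector_derivative t * ((1 - t\<^sup>2) powr \<alpha> * (1 - K * (1 - t\<^sup>2))\<^sup>2)) (at t)"
      by (simp add: has_real_derivative_iff_has_vector_derivative[symmetric])
  qed
  moreover have "G 1 - G x0 = (1 / K) powr (\<alpha> + 1) / ((\<alpha> + 1) * (\<alpha> + 2) * (\<alpha> + 3))"
  proof -
    have G1: "G 1 = 0" unfolding G_def by simp
    define w where "w = (1 / K) powr (\<alpha> + 1)"
    have v: "1 - x0\<^sup>2 = 1 / K" using x0sq by simp
    have e2: "\<alpha> + 2 = (\<alpha> + 1) + 1" "\<alpha> + 3 = (\<alpha> + 1) + 2" by simp_all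
    have p2: "(1 / K) powr (\<alpha> + 2) = w * (1 / K)" unfolding w_def e2 powr_add using K0
      by (simp add: powr_one)
    have p3: "(1 / K) powr (\<alpha> + 3) = w * (1 / K)\<^sup>2" unfolding w_def e2 powr_add using K0
      by (simp add: powr_numeral)
    have n: "\<alpha> + 1 \<noteq> 0" "\<alpha> + 2 \<noteq> 0" "\<alpha> + 3 \<noteq> 0" "K \<noteq> 0" using a1 K0 by simp_all
    have s1: "K * (w * (1 / K)) = w" "K\<^sup>2 * (w * (1 / K)\<^sup>2) = w" using n(4) by (simp_all add: power2_eq_square)
    have "G x0 = - (1 / 2) * (w / (\<alpha> + 1) - 2 * (K * (w * (1 / K))) / (\<alpha> + 2) + K\<^sup>2 * (w * (1 / K)\<^sup>2) / (\<alpha> + 3))"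
      unfolding G_def v p2 p3 w_def by (simp add: mult.assoc mult.commute)
    also have "\<dots> = - (1 / 2) * w * (1 / (\<alpha> + 1) - 2 / (\<alpha> + 2) + 1 / (\<alpha> + 3))"
      unfolding s1 by (simp add: algebra_simps)
    also have "1 / (\<alpha> + 1) - 2 / (\<alpha> + 2) + 1 / (\<alpha> + 3) = 2 / ((\<alpha> + 1) * (\<alpha> + 2) * (\<alpha> + 3))"
      using aux_frac2[of "\<alpha> + 1"] a1 by (simp add: add.assoc)
    also have "- (1 / 2) * w * (2 / ((\<alpha> + 1) * (\<alpha> + 2) * (\<alpha> + 3))) = - w / ((\<alpha> + 1) * (\<alpha> + 2) * (\<alpha> + 3))"
      by simp
    finally show ?thesis unfolding G1 w_def by simp
  qed
  ultimately show ?thesis unfolding x0_def by simp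
qed


context ode_sol begin

lemma bound_sq:
  assumes A1: "f 1 = A" and A0: "0 \<le> A"
    and int: "set_integrable lborel {-1..1} (\<lambda>t. (f t)\<^sup>2 * jweight \<alpha> t)"
    and nrm: "(LINT t:{-1..1}|lborel. (f t)\<^sup>2 * jweight \<alpha> t) = 1"
  shows "A\<^sup>2 \<le> ((chi + c\<^sup>2) / (4 * (\<alpha> + 1)) + 1) powr (\<alpha> + 1) * ((\<alpha> + 1) * (\<alpha> + 2) * (\<alpha> + 3))"
proof -
  define K0 where "K0 = (chi + c\<^sup>2) / (4 * (\<alpha> + 1))"
  define K where "K = K0 + 1"
  have K00: "K0 > 0" unfolding K0_def using chi a1 by (simp add: add_pos_nonneg)
  have K1: "K \<ge> 1" "K > 0" unfolding K_def using K00 by simp_all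
  define x0 where "x0 = sqrt (1 - 1 / K)"
  have q: "0 < 1 - 1 / K" "1 - 1 / K < 1" unfolding K_def using K00 by (simp_all add: field_simps)
  have x0: "0 < x0" "x0 < 1" unfolding x0_def using q by (simp_all add: real_sqrt_lt_1_iff)
  have x0sq: "x0\<^sup>2 = 1 - 1 / K" unfolding x0_def using q by simp
  have Af: "\<forall>x\<in>{-1..1}. f x \<le> A"
    using sup_at_1 A1 A0 by (metis abs_of_nonneg abs_ge_self order_trans)
  have low: "A * (1 - K * (1 - t\<^sup>2)) \<le> f t \<and> 0 \<le> A * (1 - K * (1 - t\<^sup>2))" if t: "x0 \<le> t" "t \<le> 1" for t
  proof -
    have t0: "0 < t" using t x0 by simp
    have "x0\<^sup>2 \<le> t\<^sup>2" using t x0 by (intro power_mono) auto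
    then have v1: "K * (1 - t\<^sup>2) \<le> 1" using x0sq K1
      by (simp add: field_simps)
    have v0: "0 \<le> 1 - t\<^sup>2" using t x0 by (simp add: abs_square_le_1)
    have s2: "A - A * K0 * (1 / t\<^sup>2 - 1) \<le> f t"
      using step2[OF Af A1 A0 t0 t(2)] unfolding K0_def .
    have "K0 * (1 / t\<^sup>2 - 1) \<le> K * (1 - t\<^sup>2)"
    proof -
      have tt: "t\<^sup>2 > 0" using t0 by simp
      have "1 / t\<^sup>2 - 1 = (1 - t\<^sup>2) / t\<^sup>2" using tt by (simp add: field_simps)
      moreover have "K0 \<le> K * t\<^sup>2" using v1 unfolding K_def by (simp add: algebra_simps)
      moreover have "K0 * (1 - t\<^sup>2) \<le> (K * t\<^sup>2) * (1 - t\<^sup>2)"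
        using \<open>K0 \<le> K * t\<^sup>2\<close> v0 by (rule mult_right_mono)
      ultimately have "K0 * (1 / t\<^sup>2 - 1) \<le> (K * t\<^sup>2) * (1 - t\<^sup>2) / t\<^sup>2"
        using divide_right_mono[of "K0 * (1 - t\<^sup>2)" "(K * t\<^sup>2) * (1 - t\<^sup>2)" "t\<^sup>2"] tt by simp
      also have "\<dots> = K * (1 - t\<^sup>2)" using tt by simp
      finally show ?thesis .
    qed
    then have "A * (K0 * (1 / t\<^sup>2 - 1)) \<le> A * (K * (1 - t\<^sup>2))" using A0 by (rule mult_left_mono)
    then have "A * (1 - K * (1 - t\<^sup>2)) \<le> f t" using s2 by (simp add: algebra_simps)
    moreover have "0 \<le> A * (1 - K * (1 - t\<^sup>2))" using v1 A0 by simp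
    ultimately show ?thesis by simp
  qed
  define g where "g t = A\<^sup>2 * (t * ((1 - t\<^sup>2) powr \<alpha> * (1 - K * (1 - t\<^sup>2))\<^sup>2))" for t
  define h where "h t = (f t)\<^sup>2 * jweight \<alpha> t" for t
  have gi: "(g has_integral A\<^sup>2 * ((1 / K) powr (\<alpha> + 1) / ((\<alpha> + 1) * (\<alpha> + 2) * (\<alpha> + 3)))) {x0..1}"
    unfolding g_def x0_def by (intro has_integral_mult_right antider K1) (use alpha in simp)
  have hi: "h integrable_on {-1..1}" "integral {-1..1} h = 1"
    using set_borel_integral_eq_integral[OF int] nrm unfolding h_def by simp_all
  have hi2: "h integrable_on {x0..1}"
    by (rule integrable_on_subinterval[OF hi(1)]) (use x0 in auto)
  have gh: "g t \<le> h t" if t: "t \<in> {x0..1}" for t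
  proof -
    have l: "A * (1 - K * (1 - t\<^sup>2)) \<le> f t" "0 \<le> A * (1 - K * (1 - t\<^sup>2))" using low t by auto
    have "(A * (1 - K * (1 - t\<^sup>2)))\<^sup>2 \<le> (f t)\<^sup>2" using l by (intro power_mono) auto
    then have a: "A\<^sup>2 * (1 - K * (1 - t\<^sup>2))\<^sup>2 \<le> (f t)\<^sup>2" by (simp add: power_mult_distrib)
    have w: "0 \<le> (1 - t\<^sup>2) powr \<alpha>" by simp
    have t1: "0 \<le> t" "t \<le> 1" using t x0 by auto
    have "g t = t * ((1 - t\<^sup>2) powr \<alpha> * (A\<^sup>2 * (1 - K * (1 - t\<^sup>2))\<^sup>2))" unfolding g_def by (simp add: algebra_simps)
    also have "\<dots> \<le> 1 * ((1 - t\<^sup>2) powr \<alpha> * (A\<^sup>2 * (1 - K * (1 - t\<^sup>2))\<^sup>2))"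
      using t1 w by (intro mult_right_mono) auto
    also have "\<dots> \<le> (1 - t\<^sup>2) powr \<alpha> * (f t)\<^sup>2" using a w by (simp add: mult_left_mono)
    finally show ?thesis unfolding h_def jweight_def by (simp add: mult.commute)
  qed
  have "A\<^sup>2 * ((1 / K) powr (\<alpha> + 1) / ((\<alpha> + 1) * (\<alpha> + 2) * (\<alpha> + 3))) = integral {x0..1} g"
    using gi by (simp add: integral_unique)
  also have "\<dots> \<le> integral {x0..1} h"
    using gi hi2 gh by (intro integral_le) (auto simp: has_integral_integrable)
  also have "\<dots> \<le> integral {-1..1} h"
  proof (rule integral_subset_le)
    show "{x0..1} \<subseteq> {-1..1}" using x0 by auto
    show "\<forall>x\<in>{-1..1}. 0 \<le> h x" unfolding h_def jweight_def by simp
  qed (use hi hi2 in auto)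
  also have "\<dots> = 1" using hi by simp
  finally have fin: "A\<^sup>2 * ((1 / K) powr (\<alpha> + 1) / ((\<alpha> + 1) * (\<alpha> + 2) * (\<alpha> + 3))) \<le> 1" .
  have kp: "(1 / K) powr (\<alpha> + 1) = 1 / K powr (\<alpha> + 1)" using K1 by (simp add: powr_divide)
  have pos: "K powr (\<alpha> + 1) > 0" "(\<alpha> + 1) * (\<alpha> + 2) * (\<alpha> + 3) > 0" using K1 a1 by auto
  have PP: "K powr (\<alpha> + 1) * ((\<alpha> + 1) * (\<alpha> + 2) * (\<alpha> + 3)) > 0" using pos by simp
  have "A\<^sup>2 * ((1 / K) powr (\<alpha> + 1) / ((\<alpha> + 1) * (\<alpha> + 2) * (\<alpha> + 3))) = A\<^sup>2 / (K powr (\<alpha> + 1) * ((\<alpha> + 1) * (\<alpha> + 2) * (\<alpha> + 3)))"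
    unfolding kp by simp
  with fin have "A\<^sup>2 / (K powr (\<alpha> + 1) * ((\<alpha> + 1) * (\<alpha> + 2) * (\<alpha> + 3))) \<le> 1" by simp
  then have "A\<^sup>2 \<le> K powr (\<alpha> + 1) * ((\<alpha> + 1) * (\<alpha> + 2) * (\<alpha> + 3))"
    using PP by (simp add: pos_divide_le_eq)
  then show ?thesis unfolding K_def K0_def .
qed

end

lemma two_powr_lb: "y \<ge> 0 \<Longrightarrow> (1 + y / 3)\<^sup>2 \<le> (2::real) powr y"
proof -
  assume y: "y \<ge> 0"
  have "y * (2 / 3) \<le> y * ln 2" using ln2_ge_two_thirds y by (intro mult_left_mono) auto
  then have "1 + y / 3 \<le> 1 + y / 2 * ln 2" by simp
  also have "\<dots> \<le> exp (y / 2 * ln 2)" by (rule exp_ge_add_one_self)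
  also have "\<dots> = 2 powr (y / 2)" by (simp add: powr_def)
  finally have a: "1 + y / 3 \<le> 2 powr (y / 2)" .
  have "(1 + y / 3)\<^sup>2 \<le> (2 powr (y / 2))\<^sup>2" using a y by (intro power_mono) auto
  also have "(2 powr (y / 2))\<^sup>2 = (2::real) powr y"
    by (simp add: power2_eq_square powr_add[symmetric])
  finally show ?thesis .
qed

lemma rho_bound:
  fixes \<alpha> chi c :: real
  assumes al: "\<alpha> > -1/2" and chi: "chi > 0" and ch: "chi \<ge> 6 * (\<alpha> + 1) / (\<alpha> + 3)"
    and q0: "\<alpha> \<le> 0 \<Longrightarrow> c\<^sup>2 / chi \<le> 1/2 + \<alpha>"
    and q1: "\<alpha> > 0 \<Longrightarrow> c\<^sup>2 / chi \<le> min 1 (1/2 + \<alpha>)"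
  shows "\<exists>\<rho>. \<rho> > 0 \<and> (chi + c\<^sup>2) / (4 * (\<alpha> + 1)) + 1 \<le> \<rho> * chi \<and> \<rho> powr (\<alpha> + 1) * ((\<alpha> + 2) * (\<alpha> + 3)) \<le> 9"
proof -
  define y where "y = \<alpha> + 1"
  have y0: "y > 1/2" unfolding y_def using al by simp
  have ic: "1 / chi \<le> (\<alpha> + 3) / (6 * y)"
  proof -
    have "6 * y / (\<alpha> + 3) \<le> chi" using ch unfolding y_def by simp
    moreover have "6 * y / (\<alpha> + 3) > 0" using y0 al by simp
    ultimately have pos: "0 < chi * (6 * y / (\<alpha> + 3))" using chi by (intro mult_pos_pos)
    have "1 / chi \<le> 1 / (6 * y / (\<alpha> + 3))"
      by (rule divide_left_mono[OF \<open>6 * y / (\<alpha> + 3) \<le> chi\<close> _ pos]) simp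
    then show ?thesis by simp
  qed
  have Kr: "(chi + c\<^sup>2) / (4 * (\<alpha> + 1)) + 1 = chi * ((1 + c\<^sup>2 / chi) / (4 * y) + 1 / chi)"
  proof -
    have e1: "chi * (1 + c\<^sup>2 / chi) = chi + c\<^sup>2" using chi by (simp add: distrib_left)
    have "chi * ((1 + c\<^sup>2 / chi) / (4 * y) + 1 / chi) = chi * (1 + c\<^sup>2 / chi) / (4 * y) + chi * (1 / chi)"
      by (simp only: distrib_left times_divide_eq_right)
    also have "\<dots> = (chi + c\<^sup>2) / (4 * y) + 1" unfolding e1 using chi by simp
    finally show ?thesis unfolding y_def by simp
  qed
  show ?thesis
  proof (cases "\<alpha> \<le> 0")
    case True
    define \<rho> :: real where "\<rho> = 4 / 3"
    have r: "(1 + c\<^sup>2 / chi) / (4 * y) + 1 / chi \<le> \<rho>"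
    proof -
      have "(1 + c\<^sup>2 / chi) / (4 * y) \<le> (3/2 + \<alpha>) / (4 * y)"
        using q0[OF True] y0 by (intro divide_right_mono) auto
      then have "(1 + c\<^sup>2 / chi) / (4 * y) + 1 / chi \<le> (3/2 + \<alpha>) / (4 * y) + (\<alpha> + 3) / (6 * y)"
        using ic by (rule add_mono)
      also have "\<dots> = (21/2 + 5 * \<alpha>) / (12 * y)" using y0 by (simp add: field_simps)
      also have "\<dots> \<le> \<rho>" unfolding \<rho>_def y_def using y0 al by (simp add: field_simps y_def)
      finally show ?thesis .
    qed
    have "\<rho> powr (\<alpha> + 1) \<le> \<rho> powr 1" unfolding \<rho>_def using True by (intro powr_mono) auto
    then have p: "\<rho> powr (\<alpha> + 1) \<le> 4 / 3" unfolding \<rho>_def by simp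
    have "(\<alpha> + 2) * (\<alpha> + 3) \<le> 6"
    proof -
      have "\<alpha> * (\<alpha> + 5) \<le> 0" using True al by (simp add: mult_nonpos_nonneg)
      then show ?thesis by (simp add: algebra_simps)
    qed
    moreover have "(\<alpha> + 2) * (\<alpha> + 3) \<ge> 0" using al by simp
    ultimately have "\<rho> powr (\<alpha> + 1) * ((\<alpha> + 2) * (\<alpha> + 3)) \<le> 4 / 3 * 6"
      using p by (intro mult_mono) auto
    then have "\<rho> powr (\<alpha> + 1) * ((\<alpha> + 2) * (\<alpha> + 3)) \<le> 9" by simp
    moreover have "(chi + c\<^sup>2) / (4 * (\<alpha> + 1)) + 1 \<le> \<rho> * chi"
      unfolding Kr using r chi by (simp add: mult.commute mult_left_mono)
    ultimately show ?thesis unfolding \<rho>_def by (intro exI[of _ "4/3"]) auto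
  next
    case False
    then have a0: "\<alpha> > 0" by simp
    define \<rho> where "\<rho> = (\<alpha> + 6) / (6 * y)"
    have rp: "\<rho> > 0" unfolding \<rho>_def using y0 a0 by simp
    have r: "(1 + c\<^sup>2 / chi) / (4 * y) + 1 / chi \<le> \<rho>"
    proof -
      have "(1 + c\<^sup>2 / chi) / (4 * y) \<le> 2 / (4 * y)"
        using q1[OF a0] y0 by (intro divide_right_mono) auto
      then have "(1 + c\<^sup>2 / chi) / (4 * y) + 1 / chi \<le> 2 / (4 * y) + (\<alpha> + 3) / (6 * y)"
        using ic by (rule add_mono)
      also have "\<dots> = \<rho>" unfolding \<rho>_def using y0 by (simp add: field_simps)
      finally show ?thesis .
    qed
    have K: "(chi + c\<^sup>2) / (4 * (\<alpha> + 1)) + 1 \<le> \<rho> * chi"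
      unfolding Kr using r chi by (simp add: mult.commute mult_left_mono)
    have "\<rho> powr (\<alpha> + 1) * ((\<alpha> + 2) * (\<alpha> + 3)) \<le> 9"
    proof (cases "\<alpha> \<le> 3/2")
      case True
      have r1: "\<rho> \<le> 1" unfolding \<rho>_def y_def using a0 by (simp add: field_simps)
      have "\<rho> powr (\<alpha> + 1) \<le> \<rho> powr 1" using r1 rp a0 by (intro powr_mono') auto
      then have p: "\<rho> powr (\<alpha> + 1) \<le> \<rho>" using rp by simp
      have poly: "(\<alpha> + 6) * ((\<alpha> + 2) * (\<alpha> + 3)) \<le> 54 * (\<alpha> + 1)"
      proof -
        have c1: "\<alpha> ^ 3 \<le> 3/2 * \<alpha>\<^sup>2"
        proof -
          have "\<alpha> * \<alpha>\<^sup>2 \<le> 3/2 * \<alpha>\<^sup>2" using True by (intro mult_right_mono) auto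
          then show ?thesis by (simp add: power2_eq_square power3_eq_cube)
        qed
        have c2: "\<alpha>\<^sup>2 \<le> 3/2 * \<alpha>"
        proof -
          have "\<alpha> * \<alpha> \<le> 3/2 * \<alpha>" using True a0 by (intro mult_right_mono) auto
          then show ?thesis by (simp add: power2_eq_square)
        qed
        have e: "(\<alpha> + 6) * ((\<alpha> + 2) * (\<alpha> + 3)) = \<alpha> ^ 3 + 11 * \<alpha>\<^sup>2 + 36 * \<alpha> + 36"
          by (simp add: algebra_simps power2_eq_square power3_eq_cube)
        have gen: "a3 + 11 * a2 + 36 * a + 36 \<le> 54 * (a + 1)" if "a3 \<le> 3/2 * a2" "a2 \<le> 3/2 * a" "0 < a" "a \<le> 3/2" for a a2 a3 :: real
          using that by (auto simp: field_simps)
        have "\<alpha> ^ 3 + 11 * \<alpha>\<^sup>2 + 36 * \<alpha> + 36 \<le> 54 * (\<alpha> + 1)" using gen[OF c1 c2 a0 True] .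
        then show ?thesis unfolding e .
      qed
      have "\<rho> powr (\<alpha> + 1) * ((\<alpha> + 2) * (\<alpha> + 3)) \<le> \<rho> * ((\<alpha> + 2) * (\<alpha> + 3))"
        using p a0 by (intro mult_right_mono) auto
      also have "\<dots> = (\<alpha> + 6) * ((\<alpha> + 2) * (\<alpha> + 3)) / (6 * (\<alpha> + 1))" unfolding \<rho>_def y_def by simp
      also have "\<dots> \<le> 9" using poly a0 by (simp add: divide_le_eq)
      finally show ?thesis .
    next
      case False
      have r1: "\<rho> \<le> 1/2" unfolding \<rho>_def y_def using False by (simp add: field_simps)
      have "\<rho> powr (\<alpha> + 1) \<le> (1/2) powr (\<alpha> + 1)" using r1 rp a0 by (intro powr_mono2) auto
      also have "\<dots> = 1 / 2 powr (\<alpha> + 1)" by (simp add: powr_divide)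
      finally have p: "\<rho> powr (\<alpha> + 1) \<le> 1 / 2 powr (\<alpha> + 1)" .
      have lb: "(1 + (\<alpha> + 1) / 3)\<^sup>2 \<le> 2 powr (\<alpha> + 1)" using two_powr_lb[of "\<alpha> + 1"] a0 by simp
      have e: "1 + (\<alpha> + 1) / 3 = (\<alpha> + 4) / 3" by simp
      have e2: "9 * ((\<alpha> + 4) / 3)\<^sup>2 = (\<alpha> + 4)\<^sup>2" by (simp add: power_divide)
      have "(\<alpha> + 2) * (\<alpha> + 3) \<le> (\<alpha> + 4)\<^sup>2"
        using a0 by (simp add: algebra_simps power2_eq_square)
      then have "(\<alpha> + 2) * (\<alpha> + 3) \<le> 9 * (1 + (\<alpha> + 1) / 3)\<^sup>2" unfolding e e2 .
      also have "\<dots> \<le> 9 * 2 powr (\<alpha> + 1)" using lb by simp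
      finally have q: "(\<alpha> + 2) * (\<alpha> + 3) \<le> 9 * 2 powr (\<alpha> + 1)" .
      have "\<rho> powr (\<alpha> + 1) * ((\<alpha> + 2) * (\<alpha> + 3)) \<le> 1 / 2 powr (\<alpha> + 1) * ((\<alpha> + 2) * (\<alpha> + 3))"
        using p a0 by (intro mult_right_mono) auto
      also have "\<dots> \<le> 9" using q by (simp add: divide_le_eq)
      finally show ?thesis .
    qed
    then show ?thesis using K rp by blast
  qed
qed

lemma final_arith:
  fixes \<alpha> chi c A :: real
  assumes al: "\<alpha> > -1/2" and chi: "chi > 0" and ch: "chi \<ge> 6 * (\<alpha> + 1) / (\<alpha> + 3)"
    and q0: "\<alpha> \<le> 0 \<Longrightarrow> c\<^sup>2 / chi \<le> 1/2 + \<alpha>"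
    and q1: "\<alpha> > 0 \<Longrightarrow> c\<^sup>2 / chi \<le> min 1 (1/2 + \<alpha>)"
    and A0: "A \<ge> 0"
    and AK: "A\<^sup>2 \<le> ((chi + c\<^sup>2) / (4 * (\<alpha> + 1)) + 1) powr (\<alpha> + 1) * ((\<alpha> + 1) * (\<alpha> + 2) * (\<alpha> + 3))"
  shows "A \<le> 3 * sqrt (\<alpha> + 1) * chi powr ((\<alpha> + 1) / 2)"
proof -
  obtain \<rho> where rp: "\<rho> > 0" and K: "(chi + c\<^sup>2) / (4 * (\<alpha> + 1)) + 1 \<le> \<rho> * chi"
    and r9: "\<rho> powr (\<alpha> + 1) * ((\<alpha> + 2) * (\<alpha> + 3)) \<le> 9"
    using rho_bound[OF al chi ch q0 q1] by blast
  have y: "\<alpha> + 1 > 0" using al by simp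
  have P0: "(\<alpha> + 1) * (\<alpha> + 2) * (\<alpha> + 3) \<ge> 0" using al by simp
  have "A\<^sup>2 \<le> (\<rho> * chi) powr (\<alpha> + 1) * ((\<alpha> + 1) * (\<alpha> + 2) * (\<alpha> + 3))"
  proof -
    have "((chi + c\<^sup>2) / (4 * (\<alpha> + 1)) + 1) powr (\<alpha> + 1) \<le> (\<rho> * chi) powr (\<alpha> + 1)"
      using K y chi by (intro powr_mono2) (auto simp: add_nonneg_nonneg)
    then show ?thesis using AK P0 by (meson mult_right_mono order_trans)
  qed
  also have "\<dots> = (\<rho> powr (\<alpha> + 1) * ((\<alpha> + 2) * (\<alpha> + 3))) * ((\<alpha> + 1) * chi powr (\<alpha> + 1))"
    using rp chi by (simp add: powr_mult algebra_simps)
  also have "\<dots> \<le> 9 * ((\<alpha> + 1) * chi powr (\<alpha> + 1))"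
    using r9 y by (intro mult_right_mono) auto
  finally have A2: "A\<^sup>2 \<le> 9 * ((\<alpha> + 1) * chi powr (\<alpha> + 1))" .
  have "A = sqrt (A\<^sup>2)" using A0 by simp
  also have "\<dots> \<le> sqrt (9 * ((\<alpha> + 1) * chi powr (\<alpha> + 1)))" using A2 by (rule real_sqrt_le_mono)
  also have "\<dots> = 3 * sqrt (\<alpha> + 1) * chi powr ((\<alpha> + 1) / 2)"
    using y chi by (simp add: real_sqrt_mult powr_half_sqrt_powr)
  finally show ?thesis .
qed

lemma jw_meas[measurable]: "jweight \<alpha> \<in> borel_measurable borel"
  unfolding jweight_def by measurable

lemma jw_nonneg: "jweight \<alpha> t \<ge> 0" unfolding jweight_def by simp

lemma lborel_of_abs:
  fixes h :: "real \<Rightarrow> real"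
  assumes "h absolutely_integrable_on S" "S \<in> sets borel" "h \<in> borel_measurable borel"
  shows "set_integrable lborel S h"
proof -
  have "integrable lebesgue (\<lambda>x. indicator S x *\<^sub>R h x)"
    using assms(1) unfolding absolutely_integrable_on_def set_integrable_def .
  moreover have "(\<lambda>x. indicator S x *\<^sub>R h x) \<in> borel_measurable lborel"
    using assms(2,3) by measurable
  ultimately show ?thesis unfolding set_integrable_def
    using integrable_completion by blast
qed

lemma pw_le1: "0 \<le> x \<Longrightarrow> x \<le> 1 \<Longrightarrow> 0 \<le> a \<Longrightarrow> x powr a \<le> (1::real)"
  using powr_mono'[of 0 a x] by (cases "x = 0") auto

lemma pw_le1': "1 \<le> x \<Longrightarrow> a \<le> 0 \<Longrightarrow> x powr a \<le> (1::real)"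
  using powr_mono[of a 0 x] by simp

lemma omega_int:
  assumes a: "\<alpha> > -1"
  shows "set_integrable lborel {-1..1} (jweight \<alpha>)"
proof -
  define h where "h t = (1 - t) powr \<alpha> + (1 + t) powr \<alpha>" for t :: real
  define H where "H t = - ((1 - t) powr (\<alpha> + 1) / (\<alpha> + 1)) + (1 + t) powr (\<alpha> + 1) / (\<alpha> + 1)" for t :: real
  have a1: "\<alpha> + 1 > 0" using a by simp
  have "(h has_integral (H 1 - H (-1))) {-1..1}"
  proof (rule fundamental_theorem_of_calculus_interior)
    show "continuous_on {-1..1} H"
      unfolding H_def using a1
      by (intro continuous_intros continuous_on_powr') auto
  next
    fix t :: real assume t: "t \<in> {-1<..<1}"
    have "((\<lambda>t. (1 - t) powr (\<alpha> + 1)) has_real_derivative (\<alpha> + 1) * (1 - t) powr (\<alpha> + 1 - of_nat 1) * (- 1)) (at t)"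
      by (rule DERIV_fun_powr) (use t in \<open>auto intro!: derivative_eq_intros\<close>)
    moreover have "((\<lambda>t. (1 + t) powr (\<alpha> + 1)) has_real_derivative (\<alpha> + 1) * (1 + t) powr (\<alpha> + 1 - of_nat 1) * 1) (at t)"
      by (rule DERIV_fun_powr) (use t in \<open>auto intro!: derivative_eq_intros\<close>)
    ultimately have "(H has_real_derivative - ((\<alpha> + 1) * (1 - t) powr (\<alpha> + 1 - of_nat 1) * (- 1) / (\<alpha> + 1))
        + (\<alpha> + 1) * (1 + t) powr (\<alpha> + 1 - of_nat 1) * 1 / (\<alpha> + 1)) (at t)"
      unfolding H_def by (intro DERIV_add DERIV_minus DERIV_cdivide)
    moreover have "- ((\<alpha> + 1) * (1 - t) powr (\<alpha> + 1 - of_nat 1) * (- 1) / (\<alpha> + 1))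
        + (\<alpha> + 1) * (1 + t) powr (\<alpha> + 1 - of_nat 1) * 1 / (\<alpha> + 1) = h t"
      unfolding h_def using a1 by simp
    ultimately show "(H has_vector_derivative h t) (at t)"
      by (simp add: has_real_derivative_iff_has_vector_derivative[symmetric])
  qed simp
  then have "h integrable_on {-1..1}" by blast
  then have "h absolutely_integrable_on {-1..1}"
    by (rule nonnegative_absolutely_integrable_1) (simp add: h_def)
  moreover have hm: "h \<in> borel_measurable borel" unfolding h_def by measurable
  ultimately have hi: "set_integrable lborel {-1..1} h"
    by (intro lborel_of_abs) auto
  show ?thesis
  proof (rule set_integrable_bound[OF hi])
    show "set_borel_measurable lborel {-1..1} (jweight \<alpha>)"
      unfolding set_borel_measurable_def by measurable
    show "AE x in lborel. x \<in> {-1..1} \<longrightarrow> norm (jweight \<alpha> x) \<le> norm (h x)"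
    proof (rule AE_I2, rule impI)
      fix t :: real assume t: "t \<in> {-1..1}"
      have p1: "0 \<le> (1 - t) powr \<alpha>" "0 \<le> (1 + t) powr \<alpha>" by simp_all
      have "jweight \<alpha> t \<le> h t"
      proof (cases "t = 1 \<or> t = -1")
        case True then show ?thesis unfolding jweight_def h_def by auto
      next
        case False
        with t have t1: "0 < 1 - t" "0 < 1 + t" by auto
        have w: "jweight \<alpha> t = (1 - t) powr \<alpha> * (1 + t) powr \<alpha>"
          unfolding jweight_def using t1 by (simp add: powr_mult[symmetric] algebra_simps power2_eq_square)
        show ?thesis
        proof (cases "\<alpha> \<ge> 0")
          case True
          show ?thesis
          proof (cases "t \<ge> 0")
            case True
            have "(1 - t) powr \<alpha> \<le> 1" using t1 True \<open>\<alpha> \<ge> 0\<close> by (intro pw_le1) auto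
            then have "jweight \<alpha> t \<le> 1 * (1 + t) powr \<alpha>" unfolding w using p1 by (intro mult_right_mono) auto
            then show ?thesis unfolding h_def using p1 by linarith
          next
            case False
            have "(1 + t) powr \<alpha> \<le> 1" using t1 False \<open>\<alpha> \<ge> 0\<close> by (intro pw_le1) auto
            then have "jweight \<alpha> t \<le> (1 - t) powr \<alpha> * 1" unfolding w using p1 by (intro mult_left_mono) auto
            then show ?thesis unfolding h_def using p1 by linarith
          qed
        next
          case False
          show ?thesis
          proof (cases "t \<ge> 0")
            case True
            have "(1 + t) powr \<alpha> \<le> 1" using True \<open>\<not> \<alpha> \<ge> 0\<close> by (intro pw_le1') auto
            then have "jweight \<alpha> t \<le> (1 - t) powr \<alpha> * 1" unfolding w using p1 by (intro mult_left_mono) auto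
            then show ?thesis unfolding h_def using p1 by linarith
          next
            case False
            have "(1 - t) powr \<alpha> \<le> 1" using False \<open>\<not> \<alpha> \<ge> 0\<close> by (intro pw_le1') auto
            then have "jweight \<alpha> t \<le> 1 * (1 + t) powr \<alpha>" unfolding w using p1 by (intro mult_right_mono) auto
            then show ?thesis unfolding h_def using p1 by linarith
          qed
        qed
      qed
      then show "norm (jweight \<alpha> t) \<le> norm (h t)" using jw_nonneg[of \<alpha> t] p1 unfolding h_def by simp
    qed
  qed
qed


lemma g_int:
  assumes a: "\<alpha> > -1" and m: "\<phi> \<in> borel_measurable lborel"
    and i2: "set_integrable lborel {-1..1} (\<lambda>y. (\<phi> y)\<^sup>2 * jweight \<alpha> y)"
  shows "set_integrable lborel {-1..1} (\<lambda>y. \<phi> y * jweight \<alpha> y)"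
proof (rule set_integrable_bound)
  show "set_integrable lborel {-1..1} (\<lambda>y. (\<phi> y)\<^sup>2 * jweight \<alpha> y + jweight \<alpha> y)"
    using i2 omega_int[OF a] by (rule set_integral_add(1))
  show "set_borel_measurable lborel {-1..1} (\<lambda>y. \<phi> y * jweight \<alpha> y)"
    unfolding set_borel_measurable_def using m by measurable
  show "AE x in lborel. x \<in> {-1..1} \<longrightarrow> norm (\<phi> x * jweight \<alpha> x) \<le> norm ((\<phi> x)\<^sup>2 * jweight \<alpha> x + jweight \<alpha> x)"
  proof (rule AE_I2, rule impI)
    fix x :: real
    have w: "jweight \<alpha> x \<ge> 0" by (rule jw_nonneg)
    have "\<bar>\<phi> x\<bar> \<le> (\<phi> x)\<^sup>2 + 1"
    proof (cases "\<bar>\<phi> x\<bar> \<le> 1")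
      case True then show ?thesis by (smt (verit) zero_le_power2)
    next
      case False
      then have "\<bar>\<phi> x\<bar> * 1 \<le> \<bar>\<phi> x\<bar> * \<bar>\<phi> x\<bar>" by (intro mult_left_mono) auto
      then show ?thesis by (simp add: power2_eq_square)
    qed
    then have "\<bar>\<phi> x\<bar> * jweight \<alpha> x \<le> ((\<phi> x)\<^sup>2 + 1) * jweight \<alpha> x" using w by (rule mult_right_mono)
    then show "norm (\<phi> x * jweight \<alpha> x) \<le> norm ((\<phi> x)\<^sup>2 * jweight \<alpha> x + jweight \<alpha> x)"
      using w by (simp add: abs_mult distrib_right)
  qed
qed

lemma lop_series:
  fixes g :: "real \<Rightarrow> real" and z :: real
  assumes gi: "set_integrable lborel {-1..1} g"
  shows "(LINT y:{-1..1}|lborel. exp (z * y) * g y) = (\<Sum>k. z ^ k / fact k * (LINT y:{-1..1}|lborel. y ^ k * g y))"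
    and "summable (\<lambda>k. z ^ k / fact k * (LINT y:{-1..1}|lborel. y ^ k * g y))"
proof -
  define S :: "real set" where "S = {-1..1}"
  define G where "G y = indicator S y * g y" for y
  have Gi: "integrable lborel G" using gi unfolding G_def S_def set_integrable_def by simp
  have Gm[measurable]: "G \<in> borel_measurable lborel" using Gi by (rule borel_measurable_integrable)
  have Gs: "\<bar>y\<bar> \<le> 1" if "G y \<noteq> 0" for y using that unfolding G_def S_def by (auto simp: indicator_def)
  define f where "f k y = z ^ k / fact k * (y ^ k * G y)" for k y
  have pk: "\<bar>y ^ k * G y\<bar> \<le> \<bar>G y\<bar>" for k y
  proof (cases "G y = 0")
    case False
    then have "\<bar>y\<bar> ^ k \<le> 1" using Gs by (simp add: power_le_one)
    then show ?thesis by (simp add: abs_mult power_abs mult_left_le_one_le)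
  qed simp
  have yk: "integrable lborel (\<lambda>y. y ^ k * G y)" for k
  proof (rule Bochner_Integration.integrable_bound[OF integrable_abs[OF Gi]])
    show "(\<lambda>y. y ^ k * G y) \<in> borel_measurable lborel" by measurable
    show "AE x in lborel. norm (x ^ k * G x) \<le> norm \<bar>G x\<bar>" using pk by simp
  qed
  have fi: "integrable lborel (f k)" for k unfolding f_def using yk by simp
  have nf: "norm (f k y) = inverse (fact k) * \<bar>z * y\<bar> ^ k * \<bar>G y\<bar>" for k y
    unfolding f_def by (simp add: abs_mult power_abs power_mult_distrib divide_inverse)
  have s1: "AE y in lborel. summable (\<lambda>k. norm (f k y))"
  proof (rule AE_I2)
    fix y
    show "summable (\<lambda>k. norm (f k y))" unfolding nf
      by (rule summable_mult2) (rule summable_exp)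
  qed
  have s2: "summable (\<lambda>k. \<integral>y. norm (f k y) \<partial>lborel)"
  proof (rule summable_comparison_test)
    show "summable (\<lambda>k. inverse (fact k) * \<bar>z\<bar> ^ k * (\<integral>y. \<bar>G y\<bar> \<partial>lborel))"
      by (rule summable_mult2) (rule summable_exp)
    show "\<exists>N. \<forall>n\<ge>N. norm (\<integral>y. norm (f n y) \<partial>lborel) \<le> inverse (fact n) * \<bar>z\<bar> ^ n * (\<integral>y. \<bar>G y\<bar> \<partial>lborel)"
    proof (intro exI allI impI)
      fix n :: nat
      have "(\<integral>y. norm (f n y) \<partial>lborel) \<le> (\<integral>y. inverse (fact n) * \<bar>z\<bar> ^ n * \<bar>G y\<bar> \<partial>lborel)"
      proof (rule integral_mono)
        show "integrable lborel (\<lambda>y. norm (f n y))" using fi by simp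
        show "integrable lborel (\<lambda>y. inverse (fact n) * \<bar>z\<bar> ^ n * \<bar>G y\<bar>)" using Gi by simp
        fix y
        have "norm (f n y) = inverse (fact n) * \<bar>z\<bar> ^ n * \<bar>y ^ n * G y\<bar>"
          unfolding f_def by (simp add: abs_mult divide_inverse power_abs)
        also have "\<dots> \<le> inverse (fact n) * \<bar>z\<bar> ^ n * \<bar>G y\<bar>" using pk by (intro mult_left_mono) auto
        finally show "norm (f n y) \<le> inverse (fact n) * \<bar>z\<bar> ^ n * \<bar>G y\<bar>" .
      qed
      also have "\<dots> = inverse (fact n) * \<bar>z\<bar> ^ n * (\<integral>y. \<bar>G y\<bar> \<partial>lborel)" by simp
      finally show "norm (\<integral>y. norm (f n y) \<partial>lborel) \<le> inverse (fact n) * \<bar>z\<bar> ^ n * (\<integral>y. \<bar>G y\<bar> \<partial>lborel)"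
        by simp
    qed
  qed
  have sumf: "(\<Sum>k. f k y) = exp (z * y) * G y" for y
  proof -
    have "(\<lambda>k. (z * y) ^ k /\<^sub>R fact k * G y) sums (exp (z * y) * G y)"
      by (rule sums_mult2) (rule exp_converges)
    moreover have "(\<lambda>k. (z * y) ^ k /\<^sub>R fact k * G y) = (\<lambda>k. f k y)"
      unfolding f_def by (simp add: power_mult_distrib divide_inverse algebra_simps)
    ultimately show ?thesis by (simp add: sums_iff)
  qed
  have intf: "integral\<^sup>L lborel (f k) = z ^ k / fact k * (LINT y:{-1..1}|lborel. y ^ k * g y)" for k
  proof -
    have "integral\<^sup>L lborel (f k) = z ^ k / fact k * integral\<^sup>L lborel (\<lambda>y. y ^ k * G y)"
      unfolding f_def by (rule integral_mult_right_zero)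
    also have "(\<lambda>y. y ^ k * G y) = (\<lambda>y. indicator S y *\<^sub>R (y ^ k * g y))"
      unfolding G_def by (auto simp: fun_eq_iff)
    finally show ?thesis unfolding set_lebesgue_integral_def S_def .
  qed
  have "(LINT y:{-1..1}|lborel. exp (z * y) * g y) = (\<integral>y. (\<Sum>k. f k y) \<partial>lborel)"
    unfolding sumf G_def S_def set_lebesgue_integral_def by (simp add: algebra_simps)
  also have "\<dots> = (\<Sum>k. integral\<^sup>L lborel (f k))"
    by (rule integral_suminf[OF fi s1 s2])
  finally show "(LINT y:{-1..1}|lborel. exp (z * y) * g y) = (\<Sum>k. z ^ k / fact k * (LINT y:{-1..1}|lborel. y ^ k * g y))"
    unfolding intf .
  show "summable (\<lambda>k. z ^ k / fact k * (LINT y:{-1..1}|lborel. y ^ k * g y))"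
    using summable_integral[OF fi s1 s2] unfolding intf .
qed

lemma powser_coeffs_zero:
  shows "\<forall>a::nat \<Rightarrow> real. (\<forall>y. summable (\<lambda>n. a n * y ^ n)) \<longrightarrow> (\<forall>x. -1 < x \<and> x < 1 \<longrightarrow> (\<Sum>n. a n * x ^ n) = 0) \<longrightarrow> a k = 0"
proof (induction k)
  case 0
  show ?case
  proof (intro allI impI)
    fix a :: "nat \<Rightarrow> real"
    assume "\<forall>y. summable (\<lambda>n. a n * y ^ n)" "\<forall>x. -1 < x \<and> x < 1 \<longrightarrow> (\<Sum>n. a n * x ^ n) = 0"
    then have zz: "\<forall>x. -1 < x \<and> x < 1 \<longrightarrow> (\<Sum>n. a n * x ^ n) = 0" by simp
    have "-1 < (0::real) \<and> (0::real) < 1" by simp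
    with zz have "(\<Sum>n. a n * 0 ^ n) = 0" by blast
    then show "a 0 = 0" by simp
  qed
next
  case (Suc k)
  show ?case
  proof (intro allI impI)
    fix a :: "nat \<Rightarrow> real"
    assume s: "\<forall>y. summable (\<lambda>n. a n * y ^ n)" and z: "\<forall>x. -1 < x \<and> x < 1 \<longrightarrow> (\<Sum>n. a n * x ^ n) = 0"
    have sb: "\<forall>y. summable (\<lambda>n. diffs a n * y ^ n)"
      using termdiff_converges_all s by blast
    have zb: "\<forall>x. -1 < x \<and> x < 1 \<longrightarrow> (\<Sum>n. diffs a n * x ^ n) = 0"
    proof (intro allI impI)
      fix x :: real assume x: "-1 < x \<and> x < 1"
      have d: "((\<lambda>x. \<Sum>n. a n * x ^ n) has_field_derivative (\<Sum>n. diffs a n * x ^ n)) (at x)"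
        by (rule termdiffs_strong_converges_everywhere) (use s in blast)
      have d0: "((\<lambda>x. \<Sum>n. a n * x ^ n) has_field_derivative 0) (at x)"
      proof (rule has_field_derivative_transform_within_open[of "\<lambda>_. 0" 0 x "{-1<..<1}"])
        show "((\<lambda>_. 0) has_field_derivative 0) (at x)" by simp
      qed (use x z in auto)
      show "(\<Sum>n. diffs a n * x ^ n) = 0" using DERIV_unique[OF d d0] .
    qed
    have "diffs a k = 0" using Suc.IH sb zb by blast
    then show "a (Suc k) = 0" unfolding diffs_def by simp
  qed
qed

lemma cont_mult_int:
  fixes h g :: "real \<Rightarrow> real"
  assumes h: "continuous_on UNIV h" and g: "set_integrable lborel {-1..1} g"
  shows "set_integrable lborel {-1..1} (\<lambda>y. h y * g y)"
proof -
  obtain B where B: "\<forall>x\<in>{-1..1}. \<bar>h x\<bar> \<le> B"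
    using bounded_cont[of "-1" 1 h] continuous_on_subset[OF h] by blast
  have hm: "h \<in> borel_measurable lborel"
    using borel_measurable_continuous_onI[OF h] by simp
  have gm: "set_borel_measurable lborel {-1..1} g"
    using g unfolding set_integrable_def set_borel_measurable_def by (rule borel_measurable_integrable)
  show ?thesis
  proof (rule set_integrable_bound)
    show "set_integrable lborel {-1..1} (\<lambda>y. B * \<bar>g y\<bar>)"
      using set_integrable_abs[OF g] by simp
    show "set_borel_measurable lborel {-1..1} (\<lambda>y. h y * g y)"
      using gm hm unfolding set_borel_measurable_def
      by (simp add: borel_measurable_times mult.left_commute)
    show "AE x in lborel. x \<in> {-1..1} \<longrightarrow> norm (h x * g x) \<le> norm (B * \<bar>g x\<bar>)"
    proof (rule AE_I2, rule impI)
      fix x :: real assume x: "x \<in> {-1..1}"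
      have "\<bar>h x\<bar> * \<bar>g x\<bar> \<le> B * \<bar>g x\<bar>" using B x by (intro mult_right_mono) auto
      moreover have "0 \<le> B" using B x by (meson abs_ge_zero order_trans)
      ultimately show "norm (h x * g x) \<le> norm (B * \<bar>g x\<bar>)" by (simp add: abs_mult)
    qed
  qed
qed


lemma poly_moment_zero:
  fixes g :: "real \<Rightarrow> real" and a :: "nat \<Rightarrow> real"
  assumes gi: "set_integrable lborel {-1..1} g"
    and m0: "\<And>k. (LINT y:{-1..1}|lborel. y ^ k * g y) = 0"
  shows "(LINT y:{-1..1}|lborel. (\<Sum>i\<le>n. a i * y ^ i) * g y) = 0"
proof -
  have ii: "integrable lborel (\<lambda>y. indicator {-1..1} y *\<^sub>R (a i * (y ^ i * g y)))" for i
  proof -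
    have "set_integrable lborel {-1..1} (\<lambda>y. y ^ i * g y)"
      by (rule cont_mult_int[OF _ gi]) (intro continuous_intros)
    then have "set_integrable lborel {-1..1} (\<lambda>y. a i * (y ^ i * g y))" by simp
    then show ?thesis unfolding set_integrable_def .
  qed
  have "(LINT y:{-1..1}|lborel. (\<Sum>i\<le>n. a i * y ^ i) * g y)
      = integral\<^sup>L lborel (\<lambda>y. \<Sum>i\<le>n. indicator {-1..1} y *\<^sub>R (a i * (y ^ i * g y)))"
    unfolding set_lebesgue_integral_def
    by (simp add: sum_distrib_right sum_distrib_left mult.assoc mult.left_commute)
  also have "\<dots> = (\<Sum>i\<le>n. integral\<^sup>L lborel (\<lambda>y. indicator {-1..1} y *\<^sub>R (a i * (y ^ i * g y))))"
    by (rule Bochner_Integration.integral_sum) (use ii in auto)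
  also have "\<dots> = (\<Sum>i\<le>n. a i * (LINT y:{-1..1}|lborel. y ^ i * g y))"
    unfolding set_lebesgue_integral_def by (simp add: mult.left_commute)
  also have "\<dots> = 0" using m0 by simp
  finally show ?thesis .
qed

lemma moments_zero_cont:
  fixes g h :: "real \<Rightarrow> real"
  assumes gi: "set_integrable lborel {-1..1} g"
    and m0: "\<And>k. (LINT y:{-1..1}|lborel. y ^ k * g y) = 0"
    and h: "continuous_on UNIV h"
  shows "(LINT y:{-1..1}|lborel. h y * g y) = 0"
proof -
  define L where "L = (LINT y:{-1..1}|lborel. h y * g y)"
  define Gm where "Gm = (LINT y:{-1..1}|lborel. \<bar>g y\<bar>)"
  have Gm0: "Gm \<ge> 0" unfolding Gm_def set_lebesgue_integral_def by (intro Bochner_Integration.integral_nonneg) (simp add: indicator_def)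
  have hi: "set_integrable lborel {-1..1} (\<lambda>y. h y * g y)" by (rule cont_mult_int[OF h gi])
  have key: "\<bar>L\<bar> \<le> e * Gm" if e: "e > 0" for e
  proof -
    obtain P where P: "polynomial_function P" "\<forall>x\<in>{-1..1}. norm (h x - P x) < e"
      using Stone_Weierstrass_polynomial_function[of "{-1..1::real}" h e] continuous_on_subset[OF h] e
      by auto
    obtain a n where Pe: "P = (\<lambda>x. \<Sum>i\<le>n. a i * x ^ i)"
      using P(1) real_polynomial_function_iff_sum real_polynomial_function_eq by metis
    have Pc: "continuous_on UNIV P" unfolding Pe by (intro continuous_intros)
    have Pi: "set_integrable lborel {-1..1} (\<lambda>y. P y * g y)" by (rule cont_mult_int[OF Pc gi])
    have P0: "(LINT y:{-1..1}|lborel. P y * g y) = 0" unfolding Pe by (rule poly_moment_zero[OF gi m0])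
    have dI: "set_integrable lborel {-1..1} (\<lambda>y. h y * g y - P y * g y)"
      using hi Pi by (rule set_integral_diff(1))
    have "L = (LINT y:{-1..1}|lborel. h y * g y - P y * g y)"
      unfolding L_def using set_integral_diff(2)[OF hi Pi] P0 by simp
    also have "\<bar>\<dots>\<bar> \<le> (LINT y:{-1..1}|lborel. norm (h y * g y - P y * g y))"
      using set_integral_norm_bound[OF dI] by simp
    also have "\<dots> \<le> (LINT y:{-1..1}|lborel. e * \<bar>g y\<bar>)"
    proof (rule set_integral_mono)
      show "set_integrable lborel {-1..1} (\<lambda>y. norm (h y * g y - P y * g y))"
        using dI by (rule set_integrable_norm)
      show "set_integrable lborel {-1..1} (\<lambda>y. e * \<bar>g y\<bar>)"
        using set_integrable_abs[OF gi] by simp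
      fix y :: real assume y: "y \<in> {-1..1}"
      have "norm (h y * g y - P y * g y) = \<bar>h y - P y\<bar> * \<bar>g y\<bar>" by (simp add: abs_mult left_diff_distrib[symmetric])
      also have "\<dots> \<le> e * \<bar>g y\<bar>"
      proof (rule mult_right_mono)
        show "\<bar>h y - P y\<bar> \<le> e" using P(2) y by (simp add: less_imp_le)
      qed simp
      finally show "norm (h y * g y - P y * g y) \<le> e * \<bar>g y\<bar>" .
    qed
    also have "\<dots> = e * Gm" unfolding Gm_def by simp
    finally show ?thesis .
  qed
  have "\<bar>L\<bar> \<le> 0"
  proof (rule field_le_epsilon)
    fix d :: real assume d: "0 < d"
    have "\<bar>L\<bar> \<le> d / (Gm + 1) * Gm" using key[of "d / (Gm + 1)"] d Gm0 by simp
    also have "\<dots> \<le> d"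
    proof -
      have "d / (Gm + 1) * Gm = d * (Gm / (Gm + 1))" by simp
      also have "\<dots> \<le> d * 1" using d Gm0 by (intro mult_left_mono) auto
      finally show ?thesis by simp
    qed
    finally show "\<bar>L\<bar> \<le> 0 + d" by simp
  qed
  then show ?thesis unfolding L_def by simp
qed


lemma jw_cont: "continuous_on {-1<..<1} (jweight \<alpha>)"
proof -
  have h: "\<forall>t\<in>{-1<..<1::real}. (\<lambda>t. 1 - t\<^sup>2) t \<ge> 0 \<and> ((\<lambda>t. 1 - t\<^sup>2) t = 0 \<longrightarrow> (\<lambda>t. \<alpha>) t > 0)"
  proof
    fix t :: real assume "t \<in> {-1<..<1}"
    then have "1 - t\<^sup>2 > 0" using pos1 by simp
    then show "(\<lambda>t. 1 - t\<^sup>2) t \<ge> 0 \<and> ((\<lambda>t. 1 - t\<^sup>2) t = 0 \<longrightarrow> (\<lambda>t. \<alpha>) t > 0)" by simp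
  qed
  have "continuous_on {-1<..<1} (\<lambda>t. (\<lambda>t. 1 - t\<^sup>2) t powr (\<lambda>t. \<alpha>) t)"
    by (rule continuous_on_powr'[OF _ _ h]) (auto intro!: continuous_intros)
  then show ?thesis unfolding jweight_def by simp
qed

lemma jw_pos:
  assumes "-1 < t" "t < 1" shows "jweight \<alpha> t > 0"
proof -
  have "1 - t\<^sup>2 > 0" using pos1 assms by simp
  then show ?thesis unfolding jweight_def by simp
qed

lemma no_vanish:
  fixes \<phi> :: "real \<Rightarrow> real"
  assumes gi: "set_integrable lborel {-1..1} (\<lambda>y. \<phi> y * jweight \<alpha> y)"
    and m0: "\<And>k. (LINT y:{-1..1}|lborel. y ^ k * (\<phi> y * jweight \<alpha> y)) = 0"
    and cont: "continuous_on {-1<..<1} \<phi>"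
    and x0: "-1 < x0" "x0 < 1" "\<phi> x0 \<noteq> 0"
  shows False
proof -
  define r where "r = min (x0 + 1) (1 - x0) / 2"
  have r0: "r > 0" unfolding r_def using x0 by simp
  have q1: "2 * r \<le> x0 + 1" "2 * r \<le> 1 - x0" unfolding r_def by (auto simp: min_def)
  have rr1: "-1 < x0 - r" using q1 x0 r0 by linarith
  have rr2: "x0 + r < 1" using q1 x0 r0 by linarith
  note rr = rr1 rr2
  define cl where "cl y = max (x0 - r) (min (x0 + r) y)" for y
  define bump where "bump y = max 0 (r - \<bar>y - x0\<bar>)" for y
  define \<psi> where "\<psi> t = (\<phi> t)\<^sup>2 * jweight \<alpha> t" for t
  define h where "h y = bump y * \<phi> (cl y)" for y
  define k where "k y = bump y * \<psi> (cl y)" for y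
  have clr: "cl y \<in> {-1<..<1}" for y unfolding cl_def using rr r0 by auto
  have clc: "continuous_on UNIV cl" unfolding cl_def by (intro continuous_intros)
  have bc: "continuous_on UNIV bump" unfolding bump_def by (intro continuous_intros)
  have \<psi>c: "continuous_on {-1<..<1} \<psi>" unfolding \<psi>_def by (intro continuous_intros cont jw_cont)
  have \<phi>cl: "continuous_on UNIV (\<lambda>y. \<phi> (cl y))"
    by (rule continuous_on_compose2[OF cont clc]) (use clr in auto)
  have \<psi>cl: "continuous_on UNIV (\<lambda>y. \<psi> (cl y))"
    by (rule continuous_on_compose2[OF \<psi>c clc]) (use clr in auto)
  have hc: "continuous_on UNIV h" unfolding h_def by (intro continuous_intros bc \<phi>cl)
  have kc: "continuous_on UNIV k" unfolding k_def by (intro continuous_intros bc \<psi>cl)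
  have hk: "h y * (\<phi> y * jweight \<alpha> y) = k y" for y
  proof (cases "\<bar>y - x0\<bar> \<le> r")
    case True
    then have "cl y = y" unfolding cl_def by auto
    then show ?thesis unfolding h_def k_def \<psi>_def by (simp add: power2_eq_square)
  next
    case False
    then have "bump y = 0" unfolding bump_def by auto
    then show ?thesis unfolding h_def k_def by simp
  qed
  have L0: "(LINT y:{-1..1}|lborel. k y) = 0"
    using moments_zero_cont[OF gi m0 hc] unfolding hk .
  have ki: "set_integrable lborel {-1..1} k"
    using cont_mult_int[OF hc gi] unfolding hk .
  have "k integrable_on {-1..1}" "integral {-1..1} k = 0"
    using set_borel_integral_eq_integral[OF ki] L0 by auto
  then have kh: "(k has_integral 0) (cbox (-1) 1)" by (simp add: has_integral_integral cbox_interval)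
  have "k x0 = 0"
  proof (rule has_integral_0_cbox_imp_0[OF _ _ kh])
    show "continuous_on (cbox (-1) 1) k" using kc by (rule continuous_on_subset) auto
    show "\<And>x. x \<in> box (-1) 1 \<Longrightarrow> 0 \<le> k x" unfolding k_def bump_def \<psi>_def by (simp add: jw_nonneg)
    show "box (-1) (1::real) \<noteq> {}" by (simp add: box_real)
    show "x0 \<in> cbox (-1) 1" using x0 by (simp add: cbox_interval)
  qed
  moreover have "k x0 > 0"
  proof -
    have "cl x0 = x0" unfolding cl_def using r0 by auto
    moreover have "bump x0 = r" unfolding bump_def using r0 by simp
    ultimately have "k x0 = r * ((\<phi> x0)\<^sup>2 * jweight \<alpha> x0)" unfolding k_def \<psi>_def by simp
    moreover have "jweight \<alpha> x0 > 0" using jw_pos x0 by simp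
    ultimately show ?thesis using r0 x0 by simp
  qed
  ultimately show False by simp
qed

theorem theorem2:
  fixes c \<alpha> chi :: real and n :: nat and \<phi> :: "real \<Rightarrow> real"
  assumes "c > 0" and "\<alpha> > -1/2"
    and "is_phi c \<alpha> n \<phi>"
    and "SL_eigenvalue c \<alpha> \<phi> chi"
    and "chi \<ge> 6 * (\<alpha> + 1) / (\<alpha> + 3)"
    and "\<alpha> \<le> 0 \<Longrightarrow> c\<^sup>2 / chi \<le> 1/2 + \<alpha>"
    and "\<alpha> > 0 \<Longrightarrow> c\<^sup>2 / chi \<le> min 1 (1/2 + \<alpha>)"
  shows "(SUP t\<in>{-1..1}. \<bar>\<phi> t\<bar>) = \<bar>\<phi> 1\<bar> \<and>
         \<bar>\<phi> 1\<bar> \<le> 3 * sqrt (\<alpha> + 1) * chi powr ((\<alpha> + 1) / 2)"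
proof -
  note c0 = assms(1) and al = assms(2) and ch = assms(5) and q0 = assms(6) and q1 = assms(7)
  from assms(3) obtain \<mu> where ef: "is_eigenfun c \<alpha> \<mu> \<phi>" and nrm: "normsq_w \<alpha> \<phi> = 1"
    unfolding is_phi_def by blast
  from ef have L2: "in_L2w \<alpha> \<phi>" and npos: "normsq_w \<alpha> \<phi> > 0"
    and eig: "\<forall>x\<in>{-1..1}. Lop c \<alpha> \<phi> x = \<mu> * \<phi> x"
    unfolding is_eigenfun_def by auto
  from L2 have \<phi>m[measurable]: "\<phi> \<in> borel_measurable lborel"
    and i2: "set_integrable lborel {-1..1} (\<lambda>y. (\<phi> y)\<^sup>2 * jweight \<alpha> y)"
    unfolding in_L2w_def by auto
  have al1: "\<alpha> > -1" using al by simp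
  have a1: "\<alpha> + 1 > 0" using al by simp
  have chi0: "chi > 0"
  proof -
    have "6 * (\<alpha> + 1) / (\<alpha> + 3) > 0" using al by simp
    then show ?thesis using ch by linarith
  qed
  have cq: "c\<^sup>2 \<le> (2 * \<alpha> + 1) * chi"
  proof -
    have "c\<^sup>2 / chi \<le> 1/2 + \<alpha>"
      using q0 q1 by (cases "\<alpha> \<le> 0") auto
    then have "c\<^sup>2 \<le> (1/2 + \<alpha>) * chi" using chi0 by (simp add: divide_le_eq)
    also have "\<dots> \<le> (2 * \<alpha> + 1) * chi" using chi0 al by (intro mult_right_mono) auto
    finally show ?thesis .
  qed
  define g where "g y = \<phi> y * jweight \<alpha> y" for y
  have gi: "set_integrable lborel {-1..1} g" unfolding g_def by (rule g_int[OF al1 \<phi>m i2])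
  define m where "m k = (LINT y:{-1..1}|lborel. y ^ k * g y)" for k
  define a where "a k = c ^ k / fact k * m k" for k
  have Lser: "Lop c \<alpha> \<phi> x = (\<Sum>k. a k * x ^ k)" for x
  proof -
    have "Lop c \<alpha> \<phi> x = (LINT y:{-1..1}|lborel. exp ((c * x) * y) * g y)"
      unfolding Lop_def g_def by (simp add: mult.assoc)
    also have "\<dots> = (\<Sum>k. (c * x) ^ k / fact k * m k)" unfolding m_def by (rule lop_series(1)[OF gi])
    also have "\<dots> = (\<Sum>k. a k * x ^ k)" unfolding a_def by (simp add: power_mult_distrib mult.commute mult.left_commute)
    finally show ?thesis .
  qed
  have asum: "summable (\<lambda>k. a k * y ^ k)" for y
  proof -
    have "summable (\<lambda>k. (c * y) ^ k / fact k * m k)" unfolding m_def by (rule lop_series(2)[OF gi])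
    moreover have "(\<lambda>k. (c * y) ^ k / fact k * m k) = (\<lambda>k. a k * y ^ k)"
      unfolding a_def by (simp add: power_mult_distrib mult.commute mult.left_commute)
    ultimately show ?thesis by simp
  qed
  from assms(4) obtain dphi D where SL: "\<forall>x\<in>{-1<..<1}.
     (\<phi> has_real_derivative dphi x) (at x) \<and>
     ((\<lambda>t. jweight \<alpha> t * (1 - t\<^sup>2) * dphi t) has_real_derivative D x) (at x) \<and>
     - D x - c\<^sup>2 * x\<^sup>2 * jweight \<alpha> x * \<phi> x = chi * jweight \<alpha> x * \<phi> x"
    unfolding SL_eigenvalue_def by blast
  have \<phi>c: "continuous_on {-1<..<1} \<phi>"
    using SL by (meson DERIV_continuous continuous_at_imp_continuous_on)
  have mu0: "\<mu> \<noteq> 0"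
  proof
    assume mu: "\<mu> = 0"
    have z: "\<forall>x. -1 < x \<and> x < 1 \<longrightarrow> (\<Sum>n. a n * x ^ n) = 0"
      using eig mu Lser by auto
    have ak: "a k = 0" for k using powser_coeffs_zero[of k] asum z by blast
    have mk: "m k = 0" for k
    proof -
      have "c ^ k / fact k \<noteq> 0" using c0 by simp
      then show ?thesis using ak[of k] c0 unfolding a_def by simp
    qed
    have "\<exists>x0. -1 < x0 \<and> x0 < 1 \<and> \<phi> x0 \<noteq> 0"
    proof (rule ccontr)
      assume "\<not> ?thesis"
      then have zz: "\<phi> x = 0" if "-1 < x" "x < 1" for x using that by auto
      have "(LINT y:{-1..1}|lborel. (\<phi> y)\<^sup>2 * jweight \<alpha> y) = 0"
        unfolding set_lebesgue_integral_def
      proof (rule integral_eq_zero_AE)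
        show "AE x in lborel. indicator {-1..1} x *\<^sub>R ((\<phi> x)\<^sup>2 * jweight \<alpha> x) = (0::real)"
          using AE_lborel_singleton[of "-1::real"] AE_lborel_singleton[of "1::real"]
        proof eventually_elim
          case (elim x)
          then show ?case using zz[of x] by (auto simp: indicator_def)
        qed
      qed
      then have "normsq_w \<alpha> \<phi> = 0" unfolding normsq_w_def by simp
      then show False using npos by simp
    qed
    then obtain x0 where x0: "-1 < x0" "x0 < 1" "\<phi> x0 \<noteq> 0" by blast
    show False
      by (rule no_vanish[of \<phi> \<alpha> x0]) (use gi[unfolded g_def] mk x0 \<phi>c in \<open>auto simp: g_def m_def\<close>)
  qed
  define f where "f x = (\<Sum>k. a k * x ^ k) / \<mu>" for x
  define f1 where "f1 x = (\<Sum>k. diffs a k * x ^ k) / \<mu>" for x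
  define f2 where "f2 x = (\<Sum>k. diffs (diffs a) k * x ^ k) / \<mu>" for x
  have asum1: "summable (\<lambda>k. diffs a k * y ^ k)" for y using termdiff_converges_all asum by blast
  have d1: "(f has_real_derivative f1 x) (at x)" for x
    unfolding f_def f1_def by (intro DERIV_cdivide termdiffs_strong_converges_everywhere asum)
  have d2: "(f1 has_real_derivative f2 x) (at x)" for x
    unfolding f1_def f2_def by (intro DERIV_cdivide termdiffs_strong_converges_everywhere asum1)
  have \<phi>f: "\<phi> x = f x" if "x \<in> {-1..1}" for x
    using eig that Lser mu0 unfolding f_def by (simp add: field_simps)
  have dphi: "dphi x = f1 x" if x: "-1 < x" "x < 1" for x
  proof -
    have "(\<phi> has_real_derivative dphi x) (at x)" using SL x by auto
    then have "(f has_real_derivative dphi x) (at x)"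
      by (rule has_field_derivative_transform_within_open[of _ _ _ "{-1<..<1}"]) (use x \<phi>f in auto)
    then show ?thesis using DERIV_unique d1 by blast
  qed
  have ode: "(1 - x\<^sup>2) * f2 x - 2 * (\<alpha> + 1) * x * f1 x + (chi + c\<^sup>2 * x\<^sup>2) * f x = 0"
    if x: "-1 < x" "x < 1" for x
  proof -
    define w where "w = (1 - x\<^sup>2) powr \<alpha>"
    have hx: "1 - x\<^sup>2 > 0" using pos1 x by simp
    have w0: "w > 0" unfolding w_def using hx by simp
    have ww: "(1 - x\<^sup>2) powr (\<alpha> - 1) * (1 - x\<^sup>2) = w"
      unfolding w_def using powr_succ[of "1 - x\<^sup>2" "\<alpha> - 1"] hx by simp
    have DD: "((\<lambda>t. jweight \<alpha> t * (1 - t\<^sup>2) * dphi t) has_real_derivative D x) (at x)" using SL x by auto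
    then have DD': "((\<lambda>t. jweight \<alpha> t * (1 - t\<^sup>2) * f1 t) has_real_derivative D x) (at x)"
      by (rule has_field_derivative_transform_within_open[of _ _ _ "{-1<..<1}"]) (use x dphi in auto)
    have dq: "((\<lambda>t. jweight \<alpha> t * (1 - t\<^sup>2)) has_real_derivative
        (1 - x\<^sup>2) powr \<alpha> * (- 2 * x) + \<alpha> * (1 - x\<^sup>2) powr (\<alpha> - 1) * (- 2 * x) * (1 - x\<^sup>2)) (at x)"
    proof -
      have "((\<lambda>t. 1 - t\<^sup>2) has_real_derivative - 2 * x) (at x)" by (auto intro!: derivative_eq_intros)
      with dpow[OF x, of \<alpha>] show ?thesis unfolding jweight_def by (rule DERIV_mult')
    qed
    have "((\<lambda>t. jweight \<alpha> t * (1 - t\<^sup>2) * f1 t) has_real_derivative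
        jweight \<alpha> x * (1 - x\<^sup>2) * f2 x + ((1 - x\<^sup>2) powr \<alpha> * (- 2 * x) + \<alpha> * (1 - x\<^sup>2) powr (\<alpha> - 1) * (- 2 * x) * (1 - x\<^sup>2)) * f1 x) (at x)"
      by (rule DERIV_mult'[OF dq d2])
    then have Dx: "D x = jweight \<alpha> x * (1 - x\<^sup>2) * f2 x + ((1 - x\<^sup>2) powr \<alpha> * (- 2 * x) + \<alpha> * (1 - x\<^sup>2) powr (\<alpha> - 1) * (- 2 * x) * (1 - x\<^sup>2)) * f1 x"
      using DERIV_unique DD' by blast
    have Dx2: "D x = w * ((1 - x\<^sup>2) * f2 x - 2 * (\<alpha> + 1) * x * f1 x)"
    proof -
      have "\<alpha> * (1 - x\<^sup>2) powr (\<alpha> - 1) * (- 2 * x) * (1 - x\<^sup>2) = \<alpha> * (- 2 * x) * ((1 - x\<^sup>2) powr (\<alpha> - 1) * (1 - x\<^sup>2))"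
        by (simp only: mult_ac)
      also have "\<dots> = \<alpha> * (- 2 * x) * w" unfolding ww ..
      finally have e: "\<alpha> * (1 - x\<^sup>2) powr (\<alpha> - 1) * (- 2 * x) * (1 - x\<^sup>2) = \<alpha> * (- 2 * x) * w" .
      show ?thesis unfolding Dx e unfolding jweight_def w_def[symmetric] by (simp add: algebra_simps)
    qed
    have sl: "- D x - c\<^sup>2 * x\<^sup>2 * jweight \<alpha> x * \<phi> x = chi * jweight \<alpha> x * \<phi> x" using SL x by auto
    have "w * ((1 - x\<^sup>2) * f2 x - 2 * (\<alpha> + 1) * x * f1 x + (chi + c\<^sup>2 * x\<^sup>2) * f x) = 0"
      using sl unfolding Dx2 jweight_def w_def[symmetric] \<phi>f[of x] using x \<phi>f[of x]
      by (simp add: algebra_simps)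
    then show ?thesis using w0 by simp
  qed
  interpret O: ode_sol f f1 f2 \<alpha> chi c
    using d1 d2 ode al chi0 cq by unfold_locales auto
  have fi: "set_integrable lborel {-1..1} (\<lambda>t. (f t)\<^sup>2 * jweight \<alpha> t)"
    using i2 set_integrable_cong[of lborel lborel "{-1..1}" "{-1..1}" "\<lambda>t. (f t)\<^sup>2 * jweight \<alpha> t" "\<lambda>t. (\<phi> t)\<^sup>2 * jweight \<alpha> t"] \<phi>f
    by simp
  have fn: "(LINT t:{-1..1}|lborel. (f t)\<^sup>2 * jweight \<alpha> t) = 1"
  proof -
    have "(LINT t:{-1..1}|lborel. (f t)\<^sup>2 * jweight \<alpha> t) = (LINT t:{-1..1}|lborel. (\<phi> t)\<^sup>2 * jweight \<alpha> t)"
      by (rule set_lebesgue_integral_cong) (use \<phi>f in auto)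
    then show ?thesis using nrm unfolding normsq_w_def by simp
  qed
  have one: "(1::real) \<in> {-1..1}" by simp
  have sup: "(SUP t\<in>{-1..1}. \<bar>\<phi> t\<bar>) = \<bar>\<phi> 1\<bar>"
  proof (rule cSup_eq_maximum)
    show "\<bar>\<phi> 1\<bar> \<in> (\<lambda>t. \<bar>\<phi> t\<bar>) ` {-1..1}" using one by blast
    fix y assume "y \<in> (\<lambda>t. \<bar>\<phi> t\<bar>) ` {-1..1}"
    then obtain t where t: "t \<in> {-1..1}" "y = \<bar>\<phi> t\<bar>" by blast
    then show "y \<le> \<bar>\<phi> 1\<bar>" using O.sup_at_1[OF t(1)] \<phi>f[OF t(1)] \<phi>f[OF one] by simp
  qed
  have bnd: "\<bar>\<phi> 1\<bar> \<le> 3 * sqrt (\<alpha> + 1) * chi powr ((\<alpha> + 1) / 2)"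
  proof (cases "f 1 \<ge> 0")
    case True
    have "(f 1)\<^sup>2 \<le> ((chi + c\<^sup>2) / (4 * (\<alpha> + 1)) + 1) powr (\<alpha> + 1) * ((\<alpha> + 1) * (\<alpha> + 2) * (\<alpha> + 3))"
      by (rule O.bound_sq[OF refl True fi fn])
    then have "f 1 \<le> 3 * sqrt (\<alpha> + 1) * chi powr ((\<alpha> + 1) / 2)"
      using final_arith[of \<alpha> chi c "f 1"] al chi0 ch q0 q1 True by blast
    then show ?thesis using \<phi>f[OF one] True by simp
  next
    case False
    interpret N: ode_sol "\<lambda>x. - f x" "\<lambda>x. - f1 x" "\<lambda>x. - f2 x" \<alpha> chi c
    proof unfold_locales
      fix x :: real
      show "((\<lambda>x. - f x) has_real_derivative - f1 x) (at x)" using d1 by (rule DERIV_minus)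
      show "((\<lambda>x. - f1 x) has_real_derivative - f2 x) (at x)" using d2 by (rule DERIV_minus)
    next
      fix x :: real assume "-1 < x" "x < 1"
      then show "(1 - x\<^sup>2) * - f2 x - 2 * (\<alpha> + 1) * x * - f1 x + (chi + c\<^sup>2 * x\<^sup>2) * - f x = 0"
        using ode[of x] by (simp add: algebra_simps)
    qed (use al chi0 cq in auto)
    have A0: "- f 1 \<ge> 0" using False by simp
    have "(- f 1)\<^sup>2 \<le> ((chi + c\<^sup>2) / (4 * (\<alpha> + 1)) + 1) powr (\<alpha> + 1) * ((\<alpha> + 1) * (\<alpha> + 2) * (\<alpha> + 3))"
      by (rule N.bound_sq[OF refl A0]) (use fi fn in simp_all)
    then have "- f 1 \<le> 3 * sqrt (\<alpha> + 1) * chi powr ((\<alpha> + 1) / 2)"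
      using final_arith[of \<alpha> chi c "- f 1"] al chi0 ch q0 q1 A0 by blast
    then show ?thesis using \<phi>f[OF one] False by simp
  qed
  show ?thesis using sup bnd by simp
qed


end
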